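(* Let $H$ be a complex infinite-dimensional separable Hilbert space and let $(f_n)_{n=1}^\infty$ be a frame for $H$ with analysis operator $U$. Then $(f_n)_{n=1}^\infty$ is a near-Riesz basis if and only if there exists a frame $(g_n)_{n=1}^\infty$ for $H$ with analysis operator $V$ such that $I-VU^*$ is a compact operator on $\ell^2$.
   Context: The analysis operator of a frame $(f_n)$ is $U:H\to\ell^2$, $Ux=(\langle x,f_n\rangle)_n$. The excess of a frame is the maximal number of elements that can be deleted so that the remaining sequence is still a frame; it equals $\dim\operatorname{Ker}U^*$. A near-Riesz basis is a frame with finite excess. *)

theory Defs
  imports "HOL-Analysis.Analysis" "HOL-Library.Extended_Nat"
begin

class cvector = real_vector +
  fixes scaleC :: "complex \<Rightarrow> 'a \<Rightarrow> 'a" (infixr \<open>*\<^sub>C\<close> 75)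
  assumes scaleC_add_right: "a *\<^sub>C (x + y) = a *\<^sub>C x + a *\<^sub>C y"
    and scaleC_add_left: "(a + b) *\<^sub>C x = a *\<^sub>C x + b *\<^sub>C x"
    and scaleC_scaleC: "a *\<^sub>C (b *\<^sub>C x) = (a * b) *\<^sub>C x"
    and scaleC_one: "1 *\<^sub>C x = x"
    and scaleR_scaleC: "r *\<^sub>R x = complex_of_real r *\<^sub>C x"

class cinner_space = cvector + real_normed_vector +
  fixes cinner :: "'a \<Rightarrow> 'a \<Rightarrow> complex"
  assumes cinner_conj: "cinner y x = cnj (cinner x y)"
    and cinner_add_left: "cinner (x + y) z = cinner x z + cinner y z"
    and cinner_scaleC_left: "cinner (a *\<^sub>C x) y = a * cinner x y"
    and cinner_self_nonneg: "0 \<le> Re (cinner x x)"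
    and norm_cinner: "norm x = sqrt (Re (cinner x x))"

class chilbert = cinner_space + complete_space

definition infinite_dimensional_C :: "'a::cvector itself \<Rightarrow> bool" where
  "infinite_dimensional_C _ \<longleftrightarrow>
     \<not> (\<exists>S::'a set. finite S \<and> (\<forall>x. \<exists>c. x = (\<Sum>s\<in>S. c s *\<^sub>C s)))"

definition l2 :: "(nat \<Rightarrow> complex) set" where
  "l2 = {a. summable (\<lambda>n. (cmod (a n))\<^sup>2)}"

definition l2norm :: "(nat \<Rightarrow> complex) \<Rightarrow> real" where
  "l2norm a = sqrt (\<Sum>n. (cmod (a n))\<^sup>2)"

definition l2inner :: "(nat \<Rightarrow> complex) \<Rightarrow> (nat \<Rightarrow> complex) \<Rightarrow> complex" where
  "l2inner a b = (\<Sum>n. a n * cnj (b n))"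

definition compact_op_l2 :: "((nat \<Rightarrow> complex) \<Rightarrow> (nat \<Rightarrow> complex)) \<Rightarrow> bool" where
  "compact_op_l2 T \<longleftrightarrow>
     (\<forall>a\<in>l2. T a \<in> l2) \<and>
     (\<forall>a\<in>l2. \<forall>b\<in>l2. \<forall>\<alpha> \<beta>.
        T (\<lambda>n. \<alpha> * a n + \<beta> * b n) = (\<lambda>n. \<alpha> * T a n + \<beta> * T b n)) \<and>
     (\<forall>(x :: nat \<Rightarrow> nat \<Rightarrow> complex) B. (\<forall>k. x k \<in> l2 \<and> l2norm (x k) \<le> B) \<longrightarrow>
        (\<exists>r y. strict_mono r \<and> y \<in> l2 \<and>
           (\<lambda>k. l2norm (\<lambda>n. T (x (r k)) n - y n)) \<longlonglongrightarrow> 0))"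

definition frame_on :: "nat set \<Rightarrow> (nat \<Rightarrow> 'a::chilbert) \<Rightarrow> bool" where
  "frame_on I f \<longleftrightarrow> (\<exists>A B. 0 < A \<and> 0 < B \<and>
     (\<forall>x. summable (\<lambda>n. if n \<in> I then (cmod (cinner x (f n)))\<^sup>2 else 0) \<and>
          A * (norm x)\<^sup>2 \<le> (\<Sum>n. if n \<in> I then (cmod (cinner x (f n)))\<^sup>2 else 0) \<and>
          (\<Sum>n. if n \<in> I then (cmod (cinner x (f n)))\<^sup>2 else 0) \<le> B * (norm x)\<^sup>2))"

definition frame :: "(nat \<Rightarrow> 'a::chilbert) \<Rightarrow> bool" where
  "frame f \<longleftrightarrow> frame_on UNIV f"

definition analysis_op :: "(nat \<Rightarrow> 'a::chilbert) \<Rightarrow> 'a \<Rightarrow> (nat \<Rightarrow> complex)" where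
  "analysis_op f x = (\<lambda>n. cinner x (f n))"

definition adjoint_l2 :: "('a::chilbert \<Rightarrow> (nat \<Rightarrow> complex)) \<Rightarrow> (nat \<Rightarrow> complex) \<Rightarrow> 'a" where
  "adjoint_l2 U c = (THE y. \<forall>x. cinner x y = l2inner (U x) c)"

definition excess :: "(nat \<Rightarrow> 'a::chilbert) \<Rightarrow> enat" where
  "excess f = Sup {if finite J then enat (card J) else \<infinity> | J. frame_on (- J) f}"

definition near_riesz_basis :: "(nat \<Rightarrow> 'a::chilbert) \<Rightarrow> bool" where
  "near_riesz_basis f \<longleftrightarrow> frame f \<and> excess f \<noteq> \<infinity>"

end

theory Submission
  imports Defs "HOL-Library.Function_Algebras"
begin


subclass (in chilbert) banach ..

section \<open>Hilbert space algebra\<close>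

lemma scaleC_zero_left [simp]: "(0::complex) *\<^sub>C (x::'a::cvector) = 0"
  using scaleR_scaleC[of 0 x] by simp

lemma scaleC_minus1: "(-1::complex) *\<^sub>C (x::'a::cvector) = - x"
  using scaleR_scaleC[of "-1" x] by simp

lemma scaleC_zero_right [simp]: "a *\<^sub>C (0::'a::cvector) = 0"
proof -
  have "a *\<^sub>C (0::'a) = a *\<^sub>C 0 + a *\<^sub>C 0" by (metis add_0 scaleC_add_right)
  then show ?thesis by simp
qed

lemma scaleC_minus_right: "a *\<^sub>C (- x::'a::cvector) = - (a *\<^sub>C x)"
proof -
  have "a *\<^sub>C x + a *\<^sub>C (- x) = 0" using scaleC_add_right[of a x "-x"] by simp
  then show ?thesis by (simp add: eq_neg_iff_add_eq_0 add.commute)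
qed

lemma scaleC_diff_right: "a *\<^sub>C (x - y::'a::cvector) = a *\<^sub>C x - a *\<^sub>C y"
  using scaleC_add_right[of a x "-y"] by (simp add: scaleC_minus_right)

lemma scaleC_minus_left: "(- a) *\<^sub>C (x::'a::cvector) = - (a *\<^sub>C x)"
  using scaleC_scaleC[of "-1" a x] by (simp add: scaleC_minus1)

lemma scaleC_diff_left: "(a - b) *\<^sub>C (x::'a::cvector) = a *\<^sub>C x - b *\<^sub>C x"
  using scaleC_add_left[of a "-b" x] by (simp add: scaleC_minus_left)

lemma scaleC_sum_right: "a *\<^sub>C (\<Sum>i\<in>S. g i) = (\<Sum>i\<in>S. a *\<^sub>C (g i::'a::cvector))"
  by (induct S rule: infinite_finite_induct) (auto simp: scaleC_add_right)

lemma scaleC_real: "(complex_of_real r) *\<^sub>C (x::'a::cvector) = r *\<^sub>R x"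
  by (simp add: scaleR_scaleC)

lemma cnj_cinner [simp]: "cnj (cinner x y) = cinner y (x::'a::cinner_space)"
  using cinner_conj[of y x] by simp

lemma cinner_add_right: "cinner x (y + z) = cinner x y + cinner (x::'a::cinner_space) z"
proof -
  have "cinner x (y + z) = cnj (cinner (y + z) x)" by simp
  also have "\<dots> = cinner x y + cinner x z" by (simp only: cinner_add_left complex_cnj_add cnj_cinner)
  finally show ?thesis .
qed

lemma cinner_scaleC_right: "cinner x (a *\<^sub>C y) = cnj a * cinner (x::'a::cinner_space) y"
proof -
  have "cinner x (a *\<^sub>C y) = cnj (cinner (a *\<^sub>C y) x)" by simp
  also have "\<dots> = cnj a * cinner x y" by (simp only: cinner_scaleC_left complex_cnj_mult cnj_cinner)
  finally show ?thesis .
qed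

lemma cinner_zero_left [simp]: "cinner 0 (y::'a::cinner_space) = 0"
  using cinner_scaleC_left[of 0 0 y] by simp

lemma cinner_zero_right [simp]: "cinner (x::'a::cinner_space) 0 = 0"
  using cinner_conj[of x 0] by simp

lemma cinner_minus_left: "cinner (- x) (y::'a::cinner_space) = - cinner x y"
  using cinner_scaleC_left[of "-1" x y] by (simp add: scaleC_minus1)

lemma cinner_minus_right: "cinner x (- y::'a::cinner_space) = - cinner x y"
  using cinner_scaleC_right[of x "-1" y] by (simp add: scaleC_minus1)

lemma cinner_diff_left: "cinner (x - y) (z::'a::cinner_space) = cinner x z - cinner y z"
  using cinner_add_left[of x "-y" z] by (simp add: cinner_minus_left)

lemma cinner_diff_right: "cinner x (y - z::'a::cinner_space) = cinner x y - cinner x z"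
  using cinner_add_right[of x y "-z"] by (simp add: cinner_minus_right)

lemma cinner_sum_left: "cinner (\<Sum>i\<in>S. g i) (y::'a::cinner_space) = (\<Sum>i\<in>S. cinner (g i) y)"
  by (induct S rule: infinite_finite_induct) (auto simp: cinner_add_left)

lemma cinner_sum_right: "cinner y (\<Sum>i\<in>S. g i) = (\<Sum>i\<in>S. cinner (y::'a::cinner_space) (g i))"
  by (induct S rule: infinite_finite_induct) (auto simp: cinner_add_right)

lemma cinner_self: "cinner x (x::'a::cinner_space) = complex_of_real ((norm x)\<^sup>2)"
proof -
  have h: "cnj (cinner x x) = cinner x x" by simp
  have "Im (cinner x x) = 0" using arg_cong[OF h, of Im] by (simp del: cnj_cinner)
  moreover have "Re (cinner x x) = (norm x)\<^sup>2"
    using norm_cinner[of x] cinner_self_nonneg[of x] by simp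
  ultimately show ?thesis by (simp add: complex_eq_iff)
qed

lemma cinner_self_Re: "Re (cinner x (x::'a::cinner_space)) = (norm x)\<^sup>2"
  by (simp add: cinner_self)

lemma cinner_scaleR_left: "cinner (r *\<^sub>R x) (y::'a::cinner_space) = r *\<^sub>R cinner x y"
  by (simp add: scaleR_scaleC cinner_scaleC_left scaleR_conv_of_real)

lemma norm_scaleC: "norm (a *\<^sub>C (x::'a::cinner_space)) = cmod a * norm x"
proof -
  have "(norm (a *\<^sub>C x))\<^sup>2 = Re (cinner (a *\<^sub>C x) (a *\<^sub>C x))" by (simp add: cinner_self_Re)
  also have "cinner (a *\<^sub>C x) (a *\<^sub>C x) = (a * cnj a) * cinner x x"
    by (simp add: cinner_scaleC_left cinner_scaleC_right mult.assoc)
  also have "(a * cnj a) * cinner x x = complex_of_real ((cmod a)\<^sup>2 * (norm x)\<^sup>2)"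
    by (simp only: complex_norm_square[symmetric] cinner_self of_real_mult)
  also have "Re (complex_of_real ((cmod a)\<^sup>2 * (norm x)\<^sup>2)) = (cmod a * norm x)\<^sup>2"
    by (simp add: power_mult_distrib)
  finally show ?thesis by (simp add: power2_eq_iff_nonneg)
qed

lemma cauchy_schwarz_H: "cmod (cinner x y) \<le> norm x * norm (y::'a::cinner_space)"
proof (cases "y = 0")
  case True then show ?thesis by simp
next
  case False
  then have ny: "norm y > 0" by simp
  define t where "t = cinner x y / complex_of_real ((norm y)\<^sup>2)"
  have "0 \<le> Re (cinner (x - t *\<^sub>C y) (x - t *\<^sub>C y))" by (rule cinner_self_nonneg)
  also have "cinner (x - t *\<^sub>C y) (x - t *\<^sub>C y) = cinner x x - cnj t * cinner x y - t * cinner y x + t * cnj t * cinner y y"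
    by (simp add: cinner_diff_left cinner_diff_right cinner_scaleC_left cinner_scaleC_right algebra_simps)
  also have "\<dots> = cinner x x - cnj t * cinner x y"
  proof -
    have a: "t * cinner y y = cinner x y" using ny by (simp add: t_def cinner_self)
    have r: "cnj (cinner y y) = cinner y y" by (simp add: cinner_self)
    have "cnj t * cinner y y = cnj (t * cinner y y)" using r by simp
    then have b: "cnj t * cinner y y = cnj (cinner x y)" using a by simp
    have "cinner y x = cnj (cinner x y)" by (rule cinner_conj)
    then show ?thesis using b by (simp add: algebra_simps)
  qed
  also have "cnj t * cinner x y = complex_of_real ((cmod (cinner x y))\<^sup>2 / (norm y)\<^sup>2)"
  proof -
    have e: "cinner y x * cinner x y = complex_of_real ((cmod (cinner x y))\<^sup>2)"
      using complex_norm_square[of "cinner x y"] by (simp add: mult.commute)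
    have "cnj t = cinner y x / complex_of_real ((norm y)\<^sup>2)" by (simp add: t_def)
    then have "cnj t * cinner x y = (cinner y x * cinner x y) / complex_of_real ((norm y)\<^sup>2)"
      by simp
    also have "\<dots> = complex_of_real ((cmod (cinner x y))\<^sup>2 / (norm y)\<^sup>2)"
      by (simp only: e of_real_divide)
    finally show ?thesis .
  qed
  finally have "(cmod (cinner x y))\<^sup>2 / (norm y)\<^sup>2 \<le> (norm x)\<^sup>2"
    by (simp add: cinner_self)
  then have "(cmod (cinner x y))\<^sup>2 \<le> (norm x * norm y)\<^sup>2"
    using ny by (simp add: field_simps power_mult_distrib)
  then show ?thesis by (rule power2_le_imp_le) simp
qed

lemma cinner_ext_right: "(\<And>x. cinner x y = cinner x z) \<Longrightarrow> y = (z::'a::cinner_space)"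
proof -
  assume h: "\<And>x. cinner x y = cinner x z"
  have "cinner (y - z) (y - z) = 0" using h[of "y - z"] by (simp add: cinner_diff_right)
  then have "norm (y - z) = 0" by (simp add: cinner_self)
  then show ?thesis by simp
qed

lemma cinner_ext_left: "(\<And>x. cinner y x = cinner z x) \<Longrightarrow> y = (z::'a::cinner_space)"
proof -
  assume h: "\<And>x. cinner y x = cinner z x"
  show ?thesis by (rule cinner_ext_right) (metis h cnj_cinner)
qed

lemma bounded_linear_cinner_left: "bounded_linear (\<lambda>x. cinner x (y::'a::cinner_space))"
proof
  show "cinner (x + z) y = cinner x y + cinner z y" for x z by (rule cinner_add_left)
  show "cinner (r *\<^sub>R x) y = r *\<^sub>R cinner x y" for r x by (rule cinner_scaleR_left)
  show "\<exists>K. \<forall>x. norm (cinner x y) \<le> norm x * K"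
    by (rule exI[of _ "norm y"]) (simp add: cauchy_schwarz_H)
qed

lemma cinner_suminf_right:
  assumes "summable (g::nat \<Rightarrow> 'a::{cinner_space})"
  shows "cinner x (suminf g) = (\<Sum>n. cinner x (g n))"
proof -
  have "(\<lambda>n. cinner (g n) x) sums cinner (suminf g) x"
    using bounded_linear.sums[OF bounded_linear_cinner_left summable_sums[OF assms]] .
  then have "(\<lambda>n. cnj (cinner (g n) x)) sums cnj (cinner (suminf g) x)"
    by (simp only: sums_cnj)
  then have "(\<lambda>n. cinner x (g n)) sums cinner x (suminf g)"
    by simp
  then show ?thesis by (simp add: sums_iff)
qed


section \<open>ell^2\<close>

lemma l2_iff: "a \<in> l2 \<longleftrightarrow> summable (\<lambda>n. (cmod (a n))\<^sup>2)"
  by (simp add: l2_def)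

lemma cmod_mult_le: "cmod x * cmod y \<le> ((cmod x)\<^sup>2 + (cmod y)\<^sup>2) / 2"
proof -
  have "0 \<le> (cmod x - cmod y)\<^sup>2" by simp
  then show ?thesis by (simp add: power2_diff field_simps)
qed

lemma cmod_add_sq_le: "(cmod (x + y))\<^sup>2 \<le> 2 * (cmod x)\<^sup>2 + 2 * (cmod y)\<^sup>2"
proof -
  have "cmod (x + y) \<le> cmod x + cmod y" by (rule norm_triangle_ineq)
  then have "(cmod (x + y))\<^sup>2 \<le> (cmod x + cmod y)\<^sup>2" by (simp add: power_mono)
  also have "\<dots> \<le> 2 * (cmod x)\<^sup>2 + 2 * (cmod y)\<^sup>2"
    using cmod_mult_le[of x y] by (simp add: power2_sum)
  finally show ?thesis .
qed

lemma l2_add: "a \<in> l2 \<Longrightarrow> b \<in> l2 \<Longrightarrow> (\<lambda>n. a n + b n) \<in> l2"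
  unfolding l2_iff
  by (rule summable_comparison_test'[of "\<lambda>n. 2 * (cmod (a n))\<^sup>2 + 2 * (cmod (b n))\<^sup>2"])
     (auto intro!: summable_add summable_mult cmod_add_sq_le)

lemma l2_scale: "a \<in> l2 \<Longrightarrow> (\<lambda>n. c * a n) \<in> l2"
  unfolding l2_iff by (simp add: norm_mult power_mult_distrib summable_mult)

lemma l2_minus: "a \<in> l2 \<Longrightarrow> (\<lambda>n. - a n) \<in> l2"
  unfolding l2_iff by simp

lemma l2_diff: "a \<in> l2 \<Longrightarrow> b \<in> l2 \<Longrightarrow> (\<lambda>n. a n - b n) \<in> l2"
  using l2_add[of a "\<lambda>n. - b n"] l2_minus[of b] by simp

lemma l2_zero: "(\<lambda>n. 0) \<in> l2"
  unfolding l2_iff by simp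

lemma l2_lincomb: "a \<in> l2 \<Longrightarrow> b \<in> l2 \<Longrightarrow> (\<lambda>n. \<alpha> * a n + \<beta> * b n) \<in> l2"
  by (intro l2_add l2_scale)

lemma l2_finsupp: "finite {n. a n \<noteq> 0} \<Longrightarrow> a \<in> l2"
  unfolding l2_iff
  by (rule summable_finite[of "{n. a n \<noteq> 0}"]) auto

lemma l2_sum: "(\<And>i. i \<in> S \<Longrightarrow> g i \<in> l2) \<Longrightarrow> (\<lambda>n. \<Sum>i\<in>S. g i n) \<in> l2"
proof (induct S rule: infinite_finite_induct)
  case (infinite A) then show ?case by (simp add: l2_zero)
next
  case empty then show ?case by (simp add: l2_zero)
next
  case (insert x F)
  then show ?case by (simp add: l2_add)
qed

lemma summable_l2inner_norm:
  assumes "a \<in> l2" "b \<in> l2"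
  shows "summable (\<lambda>n. cmod (a n * cnj (b n)))"
proof -
  have s: "summable (\<lambda>n. ((cmod (a n))\<^sup>2 + (cmod (b n))\<^sup>2) / 2)"
    using assms unfolding l2_iff by (intro summable_divide summable_add)
  have b: "\<And>n. norm (cmod (a n * cnj (b n))) \<le> ((cmod (a n))\<^sup>2 + (cmod (b n))\<^sup>2) / 2"
    using cmod_mult_le by (simp add: norm_mult)
  show ?thesis by (rule summable_comparison_test'[OF s b])


qed


lemma summable_l2inner:
  assumes "a \<in> l2" "b \<in> l2"
  shows "summable (\<lambda>n. a n * cnj (b n))"
  using summable_l2inner_norm[OF assms] by (rule summable_norm_cancel)

lemma l2inner_add_left:
  assumes "a \<in> l2" "b \<in> l2" "c \<in> l2"
  shows "l2inner (\<lambda>n. a n + b n) c = l2inner a c + l2inner b c"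
  unfolding l2inner_def using summable_l2inner[OF assms(1,3)] summable_l2inner[OF assms(2,3)]
  by (simp add: distrib_right suminf_add)

lemma l2inner_scale_left:
  assumes "a \<in> l2" "c \<in> l2"
  shows "l2inner (\<lambda>n. x * a n) c = x * l2inner a c"
  unfolding l2inner_def using summable_l2inner[OF assms] by (simp add: mult.assoc suminf_mult)

lemma l2inner_lincomb_left:
  assumes "a \<in> l2" "b \<in> l2" "c \<in> l2"
  shows "l2inner (\<lambda>n. \<alpha> * a n + \<beta> * b n) c = \<alpha> * l2inner a c + \<beta> * l2inner b c"
  using l2inner_add_left[OF l2_scale[OF assms(1)] l2_scale[OF assms(2)] assms(3)]
  by (simp add: l2inner_scale_left assms)

lemma l2inner_conj:
  assumes "a \<in> l2" "b \<in> l2"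
  shows "l2inner b a = cnj (l2inner a b)"
proof -
  have "(\<lambda>n. a n * cnj (b n)) sums l2inner a b"
    unfolding l2inner_def using summable_l2inner[OF assms] by (rule summable_sums)
  then have "(\<lambda>n. cnj (a n * cnj (b n))) sums cnj (l2inner a b)"
    by (simp only: sums_cnj)
  then have "(\<lambda>n. b n * cnj (a n)) sums cnj (l2inner a b)"
    by (simp add: mult.commute)
  then show ?thesis unfolding l2inner_def by (simp add: sums_iff)
qed

lemma l2inner_add_right:
  assumes "a \<in> l2" "b \<in> l2" "c \<in> l2"
  shows "l2inner c (\<lambda>n. a n + b n) = l2inner c a + l2inner c b"
proof -
  have "cnj (l2inner c (\<lambda>n. a n + b n)) = cnj (l2inner c a) + cnj (l2inner c b)"
    using l2inner_add_left[OF assms] l2inner_conj[OF assms(3) l2_add[OF assms(1,2)]]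
    l2inner_conj[OF assms(3,1)] l2inner_conj[OF assms(3,2)] by simp
  then have "cnj (cnj (l2inner c (\<lambda>n. a n + b n))) = cnj (cnj (l2inner c a) + cnj (l2inner c b))"
    by (rule arg_cong)
  then show ?thesis by simp
qed

lemma l2inner_scale_right:
  assumes "a \<in> l2" "c \<in> l2"
  shows "l2inner c (\<lambda>n. x * a n) = cnj x * l2inner c a"
proof -
  have "cnj (l2inner c (\<lambda>n. x * a n)) = x * cnj (l2inner c a)"
    using l2inner_scale_left[OF assms, of x] l2inner_conj[OF assms(2) l2_scale[OF assms(1)]]
    l2inner_conj[OF assms(2,1)] by simp
  then have "cnj (cnj (l2inner c (\<lambda>n. x * a n))) = cnj (x * cnj (l2inner c a))"
    by (rule arg_cong)
  then show ?thesis by simp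
qed

lemma l2inner_diff_left:
  assumes "a \<in> l2" "b \<in> l2" "c \<in> l2"
  shows "l2inner (\<lambda>n. a n - b n) c = l2inner a c - l2inner b c"
  using l2inner_lincomb_left[OF assms, of 1 "-1"] by simp

lemma l2inner_diff_right:
  assumes "a \<in> l2" "b \<in> l2" "c \<in> l2"
  shows "l2inner c (\<lambda>n. a n - b n) = l2inner c a - l2inner c b"
proof -
  have "cnj (l2inner c (\<lambda>n. a n - b n)) = cnj (l2inner c a) - cnj (l2inner c b)"
    using l2inner_diff_left[OF assms] l2inner_conj[OF assms(3) l2_diff[OF assms(1,2)]]
    l2inner_conj[OF assms(3,1)] l2inner_conj[OF assms(3,2)] by simp
  then have "cnj (cnj (l2inner c (\<lambda>n. a n - b n))) = cnj (cnj (l2inner c a) - cnj (l2inner c b))"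
    by (rule arg_cong)
  then show ?thesis by simp
qed


lemma l2inner_zero_left [simp]: "l2inner (\<lambda>n. 0) c = 0"
  unfolding l2inner_def by simp

lemma l2inner_zero_right [simp]: "l2inner c (\<lambda>n. 0) = 0"
  unfolding l2inner_def by simp

lemma l2norm_nonneg: "a \<in> l2 \<Longrightarrow> 0 \<le> l2norm a"
  unfolding l2norm_def l2_iff by (simp add: suminf_nonneg)

lemma l2norm_sq: "a \<in> l2 \<Longrightarrow> (l2norm a)\<^sup>2 = (\<Sum>n. (cmod (a n))\<^sup>2)"
  unfolding l2norm_def l2_iff by (simp add: suminf_nonneg)

lemma l2inner_self: "a \<in> l2 \<Longrightarrow> l2inner a a = complex_of_real ((l2norm a)\<^sup>2)"
proof -
  assume a: "a \<in> l2"
  have e: "\<And>n. a n * cnj (a n) = complex_of_real ((cmod (a n))\<^sup>2)"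
    by (simp only: complex_norm_square)
  have "l2inner a a = (\<Sum>n. complex_of_real ((cmod (a n))\<^sup>2))"
    unfolding l2inner_def by (simp only: e)
  also have "\<dots> = complex_of_real (\<Sum>n. (cmod (a n))\<^sup>2)"
    using a unfolding l2_iff by (rule suminf_of_real[symmetric])
  also have "\<dots> = complex_of_real ((l2norm a)\<^sup>2)"
    by (simp only: l2norm_sq[OF a])
  finally show ?thesis .
qed

lemma l2norm_eq_0: "a \<in> l2 \<Longrightarrow> l2norm a = 0 \<longleftrightarrow> a = (\<lambda>n. 0)"
proof
  assume a: "a \<in> l2" and z: "l2norm a = 0"
  then have "(\<Sum>n. (cmod (a n))\<^sup>2) = 0" using l2norm_sq[OF a] by simp
  then have "\<forall>n. (cmod (a n))\<^sup>2 = 0" using a unfolding l2_iff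
    by (simp add: suminf_eq_zero_iff)
  then show "a = (\<lambda>n. 0)" by auto
next
  assume "a = (\<lambda>n. 0)" then show "l2norm a = 0" by (simp add: l2norm_def)
qed

lemma l2norm_scale:
  assumes a: "a \<in> l2"
  shows "l2norm (\<lambda>n. c * a n) = cmod c * l2norm a"
proof -
  have e: "(\<lambda>n. (cmod (c * a n))\<^sup>2) = (\<lambda>n. (cmod c)\<^sup>2 * (cmod (a n))\<^sup>2)"
    by (simp add: norm_mult power_mult_distrib)
  have "(\<Sum>n. (cmod c)\<^sup>2 * (cmod (a n))\<^sup>2) = (cmod c)\<^sup>2 * (\<Sum>n. (cmod (a n))\<^sup>2)"
    using a unfolding l2_iff by (rule suminf_mult)
  then have "(\<Sum>n. (cmod (c * a n))\<^sup>2) = (cmod c)\<^sup>2 * (\<Sum>n. (cmod (a n))\<^sup>2)"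
    by (simp only: e)
  then show ?thesis unfolding l2norm_def by (simp add: real_sqrt_mult)
qed

lemma sum_le_sqrt: 
  fixes a b :: "nat \<Rightarrow> real"
  shows "(\<Sum>i\<in>I. a i * b i) \<le> sqrt (\<Sum>i\<in>I. (a i)\<^sup>2) * sqrt (\<Sum>i\<in>I. (b i)\<^sup>2)"
proof -
  have "(\<Sum>i\<in>I. a i * b i)\<^sup>2 \<le> (\<Sum>i\<in>I. (a i)\<^sup>2) * (\<Sum>i\<in>I. (b i)\<^sup>2)"
    by (rule Cauchy_Schwarz_ineq_sum)
  then have "\<bar>\<Sum>i\<in>I. a i * b i\<bar> \<le> sqrt ((\<Sum>i\<in>I. (a i)\<^sup>2) * (\<Sum>i\<in>I. (b i)\<^sup>2))"
    using real_sqrt_abs real_sqrt_le_mono by metis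
  then show ?thesis by (simp add: real_sqrt_mult)
qed

lemma cauchy_schwarz_l2:
  assumes "a \<in> l2" "b \<in> l2"
  shows "cmod (l2inner a b) \<le> l2norm a * l2norm b"
proof -
  have s: "summable (\<lambda>n. cmod (a n * cnj (b n)))" by (rule summable_l2inner_norm[OF assms])
  have "cmod (l2inner a b) \<le> (\<Sum>n. cmod (a n * cnj (b n)))"
    unfolding l2inner_def using s by (rule summable_norm)
  also have "\<dots> \<le> l2norm a * l2norm b"
  proof (rule suminf_le_const[OF s])
    fix n
    have "(\<Sum>i<n. cmod (a i * cnj (b i))) = (\<Sum>i<n. cmod (a i) * cmod (b i))"
      by (simp add: norm_mult)
    also have "\<dots> \<le> sqrt (\<Sum>i<n. (cmod (a i))\<^sup>2) * sqrt (\<Sum>i<n. (cmod (b i))\<^sup>2)"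
      by (rule sum_le_sqrt)
    also have "\<dots> \<le> l2norm a * l2norm b"
      unfolding l2norm_def using assms unfolding l2_iff
      by (intro mult_mono real_sqrt_le_mono sum_le_suminf) (auto intro!: suminf_nonneg sum_nonneg)
    finally show "(\<Sum>i<n. cmod (a i * cnj (b i))) \<le> l2norm a * l2norm b" .
  qed
  finally show ?thesis .
qed

lemma l2norm_triangle:
  assumes "a \<in> l2" "b \<in> l2"
  shows "l2norm (\<lambda>n. a n + b n) \<le> l2norm a + l2norm b"
proof -
  have ab: "(\<lambda>n. a n + b n) \<in> l2" by (rule l2_add[OF assms])
  have "complex_of_real ((l2norm (\<lambda>n. a n + b n))\<^sup>2) = l2inner (\<lambda>n. a n + b n) (\<lambda>n. a n + b n)"
    using l2inner_self[OF ab] by simp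
  also have "\<dots> = l2inner a a + l2inner a b + (l2inner b a + l2inner b b)"
    using assms ab by (simp add: l2inner_add_left l2inner_add_right)
  finally have "(l2norm (\<lambda>n. a n + b n))\<^sup>2 = Re (l2inner a a) + Re (l2inner b b) + 2 * Re (l2inner a b)"
    using l2inner_conj[OF assms(2,1)] by (simp add: complex_eq_iff)

  also have "\<dots> \<le> (l2norm a)\<^sup>2 + (l2norm b)\<^sup>2 + 2 * (l2norm a * l2norm b)"
    using l2inner_self[OF assms(1)] l2inner_self[OF assms(2)] cauchy_schwarz_l2[OF assms]
      complex_Re_le_cmod[of "l2inner a b"] by simp
  also have "\<dots> = (l2norm a + l2norm b)\<^sup>2" by (simp add: power2_sum)
  finally show ?thesis
    by (rule power2_le_imp_le) (simp add: l2norm_nonneg add_nonneg_nonneg assms)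
qed

lemma l2norm_minus: "l2norm (\<lambda>n. - a n) = l2norm a"
  unfolding l2norm_def by simp

lemma l2norm_diff_commute: "l2norm (\<lambda>n. a n - b n) = l2norm (\<lambda>n. b n - a n)"
  unfolding l2norm_def by (simp add: norm_minus_commute)

lemma l2norm_diff_triangle:
  assumes "a \<in> l2" "b \<in> l2" "c \<in> l2"
  shows "l2norm (\<lambda>n. a n - c n) \<le> l2norm (\<lambda>n. a n - b n) + l2norm (\<lambda>n. b n - c n)"
  using l2norm_triangle[OF l2_diff[OF assms(1,2)] l2_diff[OF assms(2,3)]] by simp

lemma l2norm_diff_le:
  assumes "a \<in> l2" "b \<in> l2"
  shows "l2norm (\<lambda>n. a n - b n) \<le> l2norm a + l2norm b"
  using l2norm_triangle[OF assms(1) l2_minus[OF assms(2)]] l2norm_minus[of b] by simp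

lemma l2norm_sum:
  assumes "\<And>i. i \<in> S \<Longrightarrow> g i \<in> l2"
  shows "l2norm (\<lambda>n. \<Sum>i\<in>S. g i n) \<le> (\<Sum>i\<in>S. l2norm (g i))"
  using assms
proof (induct S rule: infinite_finite_induct)
  case (infinite A) then show ?case by (simp add: l2norm_def)
next
  case empty then show ?case by (simp add: l2norm_def)
next
  case (insert x F)
  have "l2norm (\<lambda>n. \<Sum>i\<in>insert x F. g i n) = l2norm (\<lambda>n. g x n + (\<Sum>i\<in>F. g i n))"
    using insert by simp
  also have "\<dots> \<le> l2norm (g x) + l2norm (\<lambda>n. \<Sum>i\<in>F. g i n)"
    using insert by (intro l2norm_triangle l2_sum) auto
  also have "\<dots> \<le> l2norm (g x) + (\<Sum>i\<in>F. l2norm (g i))"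
    using insert by simp
  finally show ?case using insert by simp
qed

lemma l2_eqI: "a \<in> l2 \<Longrightarrow> l2norm a = 0 \<Longrightarrow> a = (\<lambda>n. 0)"
  using l2norm_eq_0 by blast


section \<open>Bessel sequences and synthesis\<close>

definition clinear :: "('a::cvector \<Rightarrow> 'b::cvector) \<Rightarrow> bool" where
  "clinear T \<longleftrightarrow> (\<forall>a x y. T (a *\<^sub>C x + y) = a *\<^sub>C T x + T y)"

lemma clinear_add: "clinear T \<Longrightarrow> T (x + y) = T x + T y"
  unfolding clinear_def using scaleC_one[of x] scaleC_one[of "T x"] by metis

lemma clinear_zero: "clinear T \<Longrightarrow> T 0 = 0"
  using clinear_add[of T 0 0] by simp

lemma clinear_scaleC: "clinear T \<Longrightarrow> T (a *\<^sub>C x) = a *\<^sub>C T x"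
proof -
  assume T: "clinear T"
  have "T (a *\<^sub>C x + 0) = a *\<^sub>C T x + T 0" using T unfolding clinear_def by blast
  then show ?thesis using clinear_zero[OF T] by simp
qed

lemma clinear_minus: "clinear T \<Longrightarrow> T (- x) = - T x"
  using clinear_scaleC[of T "-1" x] by (simp add: scaleC_minus1)

lemma clinear_diff: "clinear T \<Longrightarrow> T (x - y) = T x - T y"
  using clinear_add[of T x "-y"] clinear_minus[of T y] by simp

lemma clinear_scaleR: "clinear T \<Longrightarrow> T (r *\<^sub>R x) = r *\<^sub>R T x"
  using clinear_scaleC[of T "complex_of_real r" x] by (simp add: scaleR_scaleC)

lemma clinear_bounded_linear:
  assumes "clinear T" "\<And>x. norm (T x) \<le> K * norm x"
  shows "bounded_linear T"
proof
  show "T (x + y) = T x + T y" for x y using clinear_add[OF assms(1)] .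
  show "T (r *\<^sub>R x) = r *\<^sub>R T x" for r x using clinear_scaleR[OF assms(1)] .
  show "\<exists>K. \<forall>x. norm (T x) \<le> norm x * K" using assms(2) by (auto simp: mult.commute)
qed

locale bessel_seq =
  fixes f :: "nat \<Rightarrow> 'a::chilbert" and B :: real
  assumes B_pos: "0 < B"
    and bes_summable: "\<And>x. summable (\<lambda>n. (cmod (cinner x (f n)))\<^sup>2)"
    and bes_le: "\<And>x. (\<Sum>n. (cmod (cinner x (f n)))\<^sup>2) \<le> B * (norm x)\<^sup>2"
begin

abbreviation U where "U \<equiv> analysis_op f"

lemma U_apply: "U x n = cinner x (f n)"
  by (simp add: analysis_op_def)

lemma U_l2: "U x \<in> l2"
  unfolding l2_iff U_apply by (rule bes_summable)

lemma l2norm_U_sq: "(l2norm (U x))\<^sup>2 = (\<Sum>n. (cmod (cinner x (f n)))\<^sup>2)"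
  using l2norm_sq[OF U_l2] by (simp add: U_apply)

lemma l2norm_U: "l2norm (U x) \<le> sqrt B * norm x"
proof -
  have "(l2norm (U x))\<^sup>2 \<le> (sqrt B * norm x)\<^sup>2"
    using bes_le[of x] B_pos by (simp add: l2norm_U_sq power_mult_distrib)
  then show ?thesis by (rule power2_le_imp_le) (simp add: less_imp_le[OF B_pos])
qed

lemma U_lincomb: "U (a *\<^sub>C x + b *\<^sub>C y) = (\<lambda>n. a * U x n + b * U y n)"
  by (simp add: analysis_op_def cinner_add_left cinner_scaleC_left)

lemma U_diff: "U (x - y) = (\<lambda>n. U x n - U y n)"
  by (simp add: analysis_op_def cinner_diff_left)

lemma U_scaleC: "U (a *\<^sub>C x) = (\<lambda>n. a * U x n)"
  by (simp add: analysis_op_def cinner_scaleC_left)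

lemma U_zero: "U 0 = (\<lambda>n. 0)"
  by (simp add: analysis_op_def)

definition syn :: "(nat \<Rightarrow> complex) \<Rightarrow> 'a" where
  "syn c = (\<Sum>n. c n *\<^sub>C f n)"

lemma finite_synth_bound:
  assumes "finite F"
  shows "norm (\<Sum>n\<in>F. c n *\<^sub>C f n) \<le> sqrt B * sqrt (\<Sum>n\<in>F. (cmod (c n))\<^sup>2)"
proof -
  define s where "s = (\<Sum>n\<in>F. c n *\<^sub>C f n)"
  have "(norm s)\<^sup>2 = Re (cinner s s)" by (simp add: cinner_self_Re)
  also have "cinner s s = cinner s (\<Sum>n\<in>F. c n *\<^sub>C f n)" using s_def by simp
  also have "\<dots> = (\<Sum>n\<in>F. cnj (c n) * cinner s (f n))"
    by (simp add: cinner_sum_right cinner_scaleC_right)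
  also have "Re (\<Sum>n\<in>F. cnj (c n) * cinner s (f n)) \<le> (\<Sum>n\<in>F. cmod (c n) * cmod (cinner s (f n)))"
    unfolding Re_sum
    by (intro sum_mono) (metis complex_Re_le_cmod complex_mod_cnj norm_mult)
  also have "\<dots> \<le> sqrt (\<Sum>n\<in>F. (cmod (c n))\<^sup>2) * sqrt (\<Sum>n\<in>F. (cmod (cinner s (f n)))\<^sup>2)"
    by (rule sum_le_sqrt)
  also have "\<dots> \<le> sqrt (\<Sum>n\<in>F. (cmod (c n))\<^sup>2) * (sqrt B * norm s)"
  proof (rule mult_left_mono)
    have "(\<Sum>n\<in>F. (cmod (cinner s (f n)))\<^sup>2) \<le> (\<Sum>n. (cmod (cinner s (f n)))\<^sup>2)"
      using assms bes_summable by (intro sum_le_suminf) auto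
    also have "\<dots> \<le> B * (norm s)\<^sup>2" by (rule bes_le)
    also have "\<dots> = (sqrt B * norm s)\<^sup>2" using B_pos by (simp add: power_mult_distrib)
    finally show "sqrt (\<Sum>n\<in>F. (cmod (cinner s (f n)))\<^sup>2) \<le> sqrt B * norm s"
      using B_pos by (simp add: real_le_lsqrt)
  qed (simp add: sum_nonneg)
  finally have *: "(norm s)\<^sup>2 \<le> sqrt (\<Sum>n\<in>F. (cmod (c n))\<^sup>2) * (sqrt B * norm s)" .
  show ?thesis
  proof (cases "norm s = 0")
    case True then show ?thesis unfolding s_def[symmetric] using B_pos by (simp add: sum_nonneg)
  next
    case False
    then have "norm s > 0" by simp
    then show ?thesis unfolding s_def[symmetric] using *
      by (simp add: power2_eq_square mult.commute mult.left_commute)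
  qed
qed

lemma syn_summable:
  assumes c: "c \<in> l2"
  shows "summable (\<lambda>n. c n *\<^sub>C f n)"
  unfolding summable_Cauchy
proof (intro allI impI)
  fix e :: real assume e: "e > 0"
  define d where "d = (e / (sqrt B + 1))\<^sup>2"
  have sB: "sqrt B \<ge> 0" using B_pos by simp
  have sB1: "sqrt B + 1 > 0" using sB by linarith
  have d: "d > 0" unfolding d_def using e sB1 by simp
  have "summable (\<lambda>n. (cmod (c n))\<^sup>2)" using c by (simp add: l2_iff)
  then have "\<forall>e>0. \<exists>N. \<forall>m\<ge>N. \<forall>n. norm (\<Sum>k=m..<n. (cmod (c k))\<^sup>2) < e"
    unfolding summable_Cauchy .
  then have "\<exists>N. \<forall>m\<ge>N. \<forall>n. norm (\<Sum>k=m..<n. (cmod (c k))\<^sup>2) < d"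
    using d by blast
  then obtain N where N0: "\<forall>m\<ge>N. \<forall>n. norm (\<Sum>k=m..<n. (cmod (c k))\<^sup>2) < d"
    by blast
  have N: "\<And>m n. m \<ge> N \<Longrightarrow> norm (\<Sum>k=m..<n. (cmod (c k))\<^sup>2) < d"
    using N0 by blast
  show "\<exists>N. \<forall>m\<ge>N. \<forall>n. norm (\<Sum>k=m..<n. c k *\<^sub>C f k) < e"
  proof (intro exI allI impI)
    fix m n assume m: "m \<ge> N"
    have "norm (\<Sum>k=m..<n. c k *\<^sub>C f k) \<le> sqrt B * sqrt (\<Sum>k=m..<n. (cmod (c k))\<^sup>2)"
      by (rule finite_synth_bound) simp
    also have "sqrt (\<Sum>k=m..<n. (cmod (c k))\<^sup>2) < e / (sqrt B + 1)"
    proof -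
      have "(\<Sum>k=m..<n. (cmod (c k))\<^sup>2) < d" using N[OF m, of n] by (simp add: sum_nonneg)
      then have "sqrt (\<Sum>k=m..<n. (cmod (c k))\<^sup>2) < sqrt d" by simp
      also have "sqrt d = e / (sqrt B + 1)" unfolding d_def using e sB1
        by simp

      finally show ?thesis .
    qed
    then have "sqrt B * sqrt (\<Sum>k=m..<n. (cmod (c k))\<^sup>2) \<le> sqrt B * (e / (sqrt B + 1))"
      using B_pos by (intro mult_left_mono) auto
    also have "\<dots> < e"
    proof -
      have "sqrt B * e < (sqrt B + 1) * e" using e by simp
      then show ?thesis using sB1 by (simp add: field_simps)
    qed

    finally show "norm (\<Sum>k=m..<n. c k *\<^sub>C f k) < e" .
  qed
qed

lemma cinner_syn:
  assumes c: "c \<in> l2"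
  shows "cinner x (syn c) = l2inner (U x) c"
proof -
  have "cinner x (syn c) = (\<Sum>n. cinner x (c n *\<^sub>C f n))"
    unfolding syn_def by (rule cinner_suminf_right[OF syn_summable[OF c]])
  also have "\<dots> = (\<Sum>n. U x n * cnj (c n))"
    by (simp add: cinner_scaleC_right U_apply mult.commute)
  finally show ?thesis by (simp add: l2inner_def)
qed

lemma syn_unique:
  assumes c: "c \<in> l2" and h: "\<And>x. cinner x y = l2inner (U x) c"
  shows "y = syn c"
  by (rule cinner_ext_right) (simp add: h cinner_syn[OF c])

lemma adjoint_syn:
  assumes c: "c \<in> l2"
  shows "adjoint_l2 U c = syn c"
  unfolding adjoint_l2_def
proof (rule the_equality)
  show "\<forall>x. cinner x (syn c) = l2inner (U x) c" using cinner_syn[OF c] by simp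
  show "\<And>y. \<forall>x. cinner x y = l2inner (U x) c \<Longrightarrow> y = syn c" using syn_unique[OF c] by simp

qed

lemma syn_lincomb:
  assumes a: "a \<in> l2" and b: "b \<in> l2"
  shows "syn (\<lambda>n. \<alpha> * a n + \<beta> * b n) = \<alpha> *\<^sub>C syn a + \<beta> *\<^sub>C syn b"
proof (rule sym, rule syn_unique[OF l2_lincomb[OF a b]])
  fix x
  have "l2inner (U x) (\<lambda>n. \<alpha> * a n + \<beta> * b n) = cnj \<alpha> * l2inner (U x) a + cnj \<beta> * l2inner (U x) b"
    using a b U_l2[of x]
    by (simp add: l2inner_add_right l2_scale l2inner_scale_right)
  then show "cinner x (\<alpha> *\<^sub>C syn a + \<beta> *\<^sub>C syn b) = l2inner (U x) (\<lambda>n. \<alpha> * a n + \<beta> * b n)"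
    by (simp add: cinner_add_right cinner_scaleC_right cinner_syn a b)
qed

lemma syn_zero: "syn (\<lambda>n. 0) = 0"
  by (simp add: syn_def)

lemma norm_syn: 
  assumes c: "c \<in> l2"
  shows "norm (syn c) \<le> sqrt B * l2norm c"
proof -
  define s where "s = syn c"
  have "(norm s)\<^sup>2 = Re (cinner s s)" by (simp add: cinner_self_Re)
  also have "cinner s s = cinner s (syn c)" using s_def by simp
  also have "\<dots> = l2inner (U s) c" by (simp add: cinner_syn c)

  also have "Re (l2inner (U s) c) \<le> l2norm (U s) * l2norm c"
    using cauchy_schwarz_l2[OF U_l2[of s] c]
 complex_Re_le_cmod[of "l2inner (U s) c"] by linarith
  also have "\<dots> \<le> sqrt B * norm s * l2norm c"
    by (intro mult_right_mono l2norm_U l2norm_nonneg c)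
  finally have *: "(norm s)\<^sup>2 \<le> sqrt B * norm s * l2norm c" .
  show ?thesis
  proof (cases "norm s = 0")
    case True then show ?thesis unfolding s_def[symmetric] using B_pos l2norm_nonneg[OF c] by simp
  next
    case False
    then have "norm s > 0" by simp
    then show ?thesis unfolding s_def[symmetric] using *
      by (simp add: power2_eq_square mult.commute mult.left_commute)
  qed
qed

end


lemma semi_cs:
  fixes P :: "'a::chilbert \<Rightarrow> 'a"
  assumes lin: "clinear P"
    and herm: "\<And>u v. cinner (P v) u = cnj (cinner (P u) v)"
    and pos: "\<And>u. 0 \<le> Re (cinner (P u) u)"
  shows "(cmod (cinner (P x) y))\<^sup>2 \<le> Re (cinner (P x) x) * Re (cinner (P y) y)"
proof -
  define b where "b = cinner (P x) y"
  define \<alpha> where "\<alpha> = Re (cinner (P x) x)"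
  define \<gamma> where "\<gamma> = Re (cinner (P y) y)"
  have \<alpha>0: "\<alpha> \<ge> 0" unfolding \<alpha>_def by (rule pos)
  have \<gamma>0: "\<gamma> \<ge> 0" unfolding \<gamma>_def by (rule pos)
  have yy: "cinner (P y) y = complex_of_real \<gamma>"
  proof -
    have h: "cinner (P y) y = cnj (cinner (P y) y)" by (rule herm)
    have "Im (cinner (P y) y) = 0" using arg_cong[OF h, of Im] by (simp del: cnj_cinner)
    then show ?thesis unfolding \<gamma>_def by (simp add: complex_eq_iff)
  qed
  have yx: "cinner (P y) x = cnj b" unfolding b_def by (rule herm)
  have bb: "cnj b * b = complex_of_real ((cmod b)\<^sup>2)"
    using complex_norm_square[of b] by (simp add: mult.commute)
  have key: "0 \<le> \<alpha> - 2 * t * (cmod b)\<^sup>2 + t\<^sup>2 * (cmod b)\<^sup>2 * \<gamma>" for t :: real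
  proof -
    define l where "l = - complex_of_real t * b"
    define z where "z = x + l *\<^sub>C y"
    have Pz: "P z = P x + l *\<^sub>C P y"
      unfolding z_def using lin by (simp add: clinear_add clinear_scaleC)
    have "cinner (P z) z = cinner (P x) x + cnj l * b + l * cnj b + l * cnj l * complex_of_real \<gamma>"
      unfolding Pz unfolding z_def
      by (simp add: cinner_add_left cinner_add_right cinner_scaleC_left cinner_scaleC_right
          yy yx b_def[symmetric] algebra_simps)
    also have "cnj l * b = - complex_of_real (t * (cmod b)\<^sup>2)"
      unfolding l_def using bb by (simp add: mult.assoc)
    also have "l * cnj b = - complex_of_real (t * (cmod b)\<^sup>2)"
      unfolding l_def using bb by (simp add: mult.assoc mult.commute[of b])
    also have "l * cnj l
 * complex_of_real \<gamma> = complex_of_real (t\<^sup>2 * (cmod b)\<^sup>2 * \<gamma>)"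
      unfolding l_def using bb
      by (simp add: power2_eq_square mult.assoc mult.left_commute[of b])
    finally have "Re (cinner (P z) z) = \<alpha> - 2 * t * (cmod b)\<^sup>2 + t\<^sup>2 * (cmod b)\<^sup>2 * \<gamma>"
      unfolding \<alpha>_def by simp
    then show ?thesis using pos[of z] by simp
  qed
  show ?thesis
  proof (cases "\<gamma> = 0")
    case True
    have "(cmod b)\<^sup>2 = 0"
    proof (rule ccontr)
      assume ne: "(cmod b)\<^sup>2 \<noteq> 0"
      then have p: "(cmod b)\<^sup>2 > 0" by simp
      have "0 \<le> \<alpha> - 2 * ((\<alpha> + 1) / (2 * (cmod b)\<^sup>2)) * (cmod b)\<^sup>2"
        using key[of "(\<alpha> + 1) / (2 * (cmod b)\<^sup>2)"] True by simp
      also have "\<dots> = -1" using p by (simp add: field_simps)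
      finally show False by simp
    qed
    then show ?thesis unfolding b_def[symmetric] \<alpha>_def[symmetric] \<gamma>_def[symmetric] using True by simp
  next
    case False
    then have g: "\<gamma> > 0" using \<gamma>0 by simp
    have "0 \<le> \<alpha> - 2 * (1 / \<gamma>) * (cmod b)\<^sup>2 + (1 / \<gamma>)\<^sup>2 * (cmod b)\<^sup>2 * \<gamma>"
      by (rule key)
    also have "\<dots> = \<alpha> - (cmod b)\<^sup>2 / \<gamma>" using g by (simp add: field_simps power2_eq_square)
    finally have "(cmod b)\<^sup>2 / \<gamma> \<le> \<alpha>" by simp
    then have "(cmod b)\<^sup>2 \<le> \<alpha> * \<gamma>" using g by (simp add: field_simps)
    then show ?thesis unfolding b_def[symmetric] \<alpha>_def[symmetric] \<gamma>_def[symmetric] .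
  qed
qed


locale frame_seq = bessel_seq +
  fixes A :: real
  assumes A_pos: "0 < A" and A_le: "A \<le> B"
    and lower: "\<And>x. A * (norm x)\<^sup>2 \<le> (\<Sum>n. (cmod (cinner x (f n)))\<^sup>2)"
begin

definition S :: "'a \<Rightarrow> 'a" where "S x = syn (U x)"

lemma S_inner_right: "cinner y (S x) = l2inner (U y) (U x)"
  unfolding S_def by (rule cinner_syn[OF U_l2])

lemma S_inner_left: "cinner (S x) y = l2inner (U x) (U y)"
proof -
  have "cinner (S x) y = cnj (cinner y (S x))" by simp
  also have "\<dots> = cnj (l2inner (U y) (U x))" by (simp only: S_inner_right)
  also have "\<dots> = l2inner (U x) (U y)" using l2inner_conj[OF U_l2[of y] U_l2[of x]] by simp
  finally show ?thesis .
qed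

lemma S_self: "cinner u (S v) = cinner (S u) v"
  by (simp add: S_inner_left S_inner_right)

lemma S_quad: "cinner (S x) x = complex_of_real (\<Sum>n. (cmod (cinner x (f n)))\<^sup>2)"
  using S_inner_left[of x x] l2inner_self[OF U_l2[of x]] l2norm_U_sq[of x] by simp

lemma S_quad_Re: "Re (cinner (S x) x) = (\<Sum>n. (cmod (cinner x (f n)))\<^sup>2)"
  by (simp add: S_quad)

lemma S_lin: "clinear S"
  unfolding clinear_def
proof (intro allI)
  fix a x y
  show "S (a *\<^sub>C x + y) = a *\<^sub>C S x + S y"
  proof (rule cinner_ext_left)
    fix z
    have "U (a *\<^sub>C x + y) = (\<lambda>n. a * U x n + 1 * U y n)"
      using U_lincomb[of a x 1 y] by (simp add: scaleC_one)
    then have "cinner (S (a *\<^sub>C x + y)) z = a * l2inner (U x) (U z) + 1 * l2inner (U y) (U z)"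
      using l2inner_lincomb_left[OF U_l2[of x] U_l2[of y] U_l2[of z], of a 1]
      by (simp add: S_inner_left)
    then show "cinner (S (a *\<^sub>C x + y)) z = cinner (a *\<^sub>C S x + S y) z"
      by (simp add: cinner_add_left cinner_scaleC_left S_inner_left)
  qed
qed

lemma S_lower: "A * (norm x)\<^sup>2 \<le> Re (cinner (S x) x)"
  using lower[of x] by (simp add: S_quad)

lemma S_upper: "Re (cinner (S x) x) \<le> B * (norm x)\<^sup>2"
  using bes_le[of x] by (simp add: S_quad)

lemma S_inj: "S x = S y \<Longrightarrow> x = y"
proof -
  assume h: "S x = S y"
  have "S (x - y) = 0" using h clinear_diff[OF S_lin] by simp
  then have "A * (norm (x - y))\<^sup>2 \<le> 0" using S_lower[of "x - y"] by simp
  then have "norm (x - y) = 0" using A_pos by (simp add: mult_le_0_iff)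
  then show "x = y" by simp
qed

lemma S_norm: "norm (S x) \<le> B * norm x"
proof -
  have "(norm (S x))\<^sup>2 = Re (cinner (S x) (S x))" by (simp add: cinner_self_Re)
  also have "\<dots> = Re (l2inner (U x) (U (S x)))" by (simp add: S_inner_left)
  also have "\<dots> \<le> l2norm (U x) * l2norm (U (S x))"
    using cauchy_schwarz_l2[OF U_l2[of x] U_l2[of "S x"]] complex_Re_le_cmod[of "l2inner (U x) (U (S x))"]
    by linarith
  also have "\<dots> \<le> (sqrt B * norm x) * (sqrt B * norm (S x))"
    by (intro mult_mono l2norm_U l2norm_nonneg U_l2) (simp add: less_imp_le[OF B_pos])
  also have "\<dots> = B * norm x * norm (S x)" using B_pos by (simp add: algebra_simps)
  finally have *: "(norm (S x))\<^sup>2 \<le> B * norm x * norm (S x)" .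
  show ?thesis
  proof (cases "norm (S x) = 0")
    case True then show ?thesis using B_pos by simp
  next
    case False then have "norm (S x) > 0" by simp
    then show ?thesis using * by (simp add: power2_eq_square)
  qed
qed

definition q :: real where "q = 1 - A / B"

lemma q_ge0: "0 \<le> q" and q_lt1: "q < 1"
  using A_pos B_pos A_le by (auto simp: q_def field_simps)

definition Q :: "'a \<Rightarrow> 'a" where "Q x = x - complex_of_real (1 / B) *\<^sub>C S x"

lemma Q_lin: "clinear Q"
  unfolding clinear_def Q_def
  using S_lin unfolding clinear_def
  by (simp add: scaleC_add_right scaleC_diff_right scaleC_scaleC mult.commute algebra_simps)

lemma Q_inner: "cinner (Q x) y = cinner x y - complex_of_real (1 / B) * cinner (S x) y"
  unfolding Q_def by (simp add: cinner_diff_left cinner_scaleC_left)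

lemma Q_herm: "cinner (Q v) u = cnj (cinner (Q u) v)"
  by (simp add: Q_inner S_self)

lemma Q_quad_Re: "Re (cinner (Q x) x) = (norm x)\<^sup>2 - (1 / B) * Re (cinner (S x) x)"
  by (simp add: Q_inner cinner_self_Re)

lemma Q_pos: "0 \<le> Re (cinner (Q x) x)"
proof -
  have "(1 / B) * Re (cinner (S x) x) \<le> (1 / B) * (B * (norm x)\<^sup>2)"
    using S_upper[of x] B_pos by (intro mult_left_mono) auto
  then show ?thesis using B_pos by (simp add: Q_quad_Re)
qed

lemma Q_le: "Re (cinner (Q x) x) \<le> q * (norm x)\<^sup>2"
proof -
  have "(1 / B) * (A * (norm x)\<^sup>2) \<le> (1 / B) * Re (cinner (S x) x)"
    using S_lower[of x] B_pos by (intro mult_left_mono) auto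
  then show ?thesis by (simp add: Q_quad_Re q_def algebra_simps)
qed

lemma Q_norm: "norm (Q x) \<le> q * norm x"
proof -
  define w where "w = Q x"
  have "(cmod (cinner (Q x) w))\<^sup>2 \<le> Re (cinner (Q x) x) * Re (cinner (Q w) w)"
    by (rule semi_cs[OF Q_lin Q_herm Q_pos])
  also have "\<dots> \<le> (q * (norm x)\<^sup>2) * (q * (norm w)\<^sup>2)"
    by (intro mult_mono Q_le Q_pos) (simp add: q_ge0)
  also have "cinner (Q x) w = complex_of_real ((norm w)\<^sup>2)" unfolding w_def by (rule cinner_self)
  also have "cmod (complex_of_real ((norm w)\<^sup>2)) = (norm w)\<^sup>2"
    by (simp only: norm_of_real) simp

  finally have *: "(norm w)\<^sup>2 * (norm w)\<^sup>2 \<le> (q * norm x)\<^sup>2 * (norm w)\<^sup>2"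
    by (simp add: power2_eq_square algebra_simps)
  have "(norm w)\<^sup>2 \<le> (q * norm x)\<^sup>2"
  proof (cases "norm w = 0")
    case True then show ?thesis by simp
  next
    case False then have "(norm w)\<^sup>2 > 0" by simp
    then show ?thesis using * mult_right_le_imp_le by blast

  qed

  then show ?thesis unfolding w_def[symmetric]
    by (rule power2_le_imp_le) (simp add: q_ge0)
qed

lemma Q_bl: "bounded_linear Q"
proof (rule clinear_bounded_linear[OF Q_lin])
  show "norm (Q x) \<le> 1 * norm x" for x
    using Q_norm[of x] q_lt1 by (meson mult_right_mono norm_ge_zero less_imp_le order_trans)
qed

lemma Qpow_norm: "norm ((Q ^^ k) x) \<le> q ^ k * norm x"
proof (induct k)
  case 0 then show ?case by simp
next
  case (Suc k)
  have "norm ((Q ^^ Suc k) x) = norm (Q ((Q ^^ k) x))" by simp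
  also have "\<dots> \<le> q * norm ((Q ^^ k) x)" by (rule Q_norm)
  also have "\<dots> \<le> q * (q ^ k * norm x)" using Suc q_ge0 by (intro mult_left_mono) auto
  finally show ?case by simp
qed

lemma Qpow_summable: "summable (\<lambda>k. (Q ^^ k) x)"
proof (rule summable_comparison_test'[OF _ Qpow_norm])
  show "summable (\<lambda>k. q ^ k * norm x)"
    using q_ge0 q_lt1 by (intro summable_mult2 summable_geometric) simp
qed

definition Sinv :: "'a \<Rightarrow> 'a" where
  "Sinv h = complex_of_real (1 / B) *\<^sub>C (\<Sum>k. (Q ^^ k) h)"

lemma S_via_Q: "S y = complex_of_real B *\<^sub>C (y - Q y)"
proof -
  have "y - Q y = complex_of_real (1 / B) *\<^sub>C S y" by (simp add: Q_def)
  then have "complex_of_real B *\<^sub>C (y - Q y) = (complex_of_real B * complex_of_real (1 / B)) *\<^sub>C S y"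
    by (simp add: scaleC_scaleC)
  also have "complex_of_real B * complex_of_real (1 / B) = 1" using B_pos by (simp flip: of_real_mult)
  finally show ?thesis by (simp add: scaleC_one)
qed

lemma S_Sinv: "S (Sinv h) = h"
proof -
  define s where "s = (\<Sum>k. (Q ^^ k) h)"
  have sm: "summable (\<lambda>k. (Q ^^ k) h)" by (rule Qpow_summable)
  have Qs: "Q s = (\<Sum>k. (Q ^^ Suc k) h)"
    unfolding s_def using bounded_linear.suminf[OF Q_bl sm] by simp
  have "(\<Sum>k. (Q ^^ Suc k) h) = s - (Q ^^ 0) h"
    unfolding s_def using suminf_split_head[OF sm] by simp
  then have d: "s - Q s = h" using Qs by simp
  have "S (Sinv h) = complex_of_real B *\<^sub>C (Sinv h - Q (Sinv h))" by (rule S_via_Q)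
  also have "Sinv h - Q (Sinv h) = complex_of_real (1 / B) *\<^sub>C (s - Q s)"
    unfolding Sinv_def s_def[symmetric] using Q_lin
    by (simp add: clinear_scaleC scaleC_diff_right)
  also have "complex_of_real B *\<^sub>C (complex_of_real (1 / B) *\<^sub>C (s - Q s)) = s - Q s"
    using B_pos by (simp add: scaleC_scaleC scaleC_one flip: of_real_mult)
  finally show ?thesis using d by simp
qed

lemma Sinv_S: "Sinv (S x) = x"
  using S_Sinv[of "S x"] S_inj by blast

lemma Sinv_lin: "clinear Sinv"
  unfolding clinear_def
proof (intro allI)
  fix a x y
  show "Sinv (a *\<^sub>C x + y) = a *\<^sub>C Sinv x + Sinv y"
    by (rule S_inj) (simp add: S_Sinv clinear_add[OF S_lin] clinear_scaleC[OF S_lin])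
qed

lemma Sinv_self: "cinner (Sinv x) y = cinner x (Sinv y)"
proof -
  have "cinner (Sinv x) y = cinner (Sinv x) (S (Sinv y))" by (simp add: S_Sinv)
  also have "\<dots> = cinner (S (Sinv x)) (Sinv y)" by (rule S_self)
  also have "\<dots> = cinner x (Sinv y)" by (simp add: S_Sinv)
  finally show ?thesis .
qed

lemma Sinv_norm: "norm (Sinv x) \<le> norm x / A"
proof -
  define y where "y = Sinv x"
  have "A * (norm y)\<^sup>2 \<le> Re (cinner (S y) y)" by (rule S_lower)
  also have "S y = x" by (simp add: y_def S_Sinv)
  also have "Re (cinner x y) \<le> norm x * norm y"
    using cauchy_schwarz_H[of x y] complex_Re_le_cmod[of "cinner x y"] by linarith
  finally have *: "A * (norm y)\<^sup>2 \<le> norm x * norm y" .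
  have "A * norm y \<le> norm x"
  proof (cases "norm y = 0")
    case True then show ?thesis by simp
  next
    case False then have "norm y > 0" by simp
    then show ?thesis using * by (simp add: power2_eq_square)
  qed
  then show ?thesis unfolding y_def[symmetric] using A_pos by (simp add: field_simps)
qed

lemma Sinv_norm_lower: "norm x \<le> B * norm (Sinv x)"
  using S_norm[of "Sinv x"] by (simp add: S_Sinv)

end


section \<open>Finite orthonormal systems in ell^2\<close>

definition lc :: "(nat \<Rightarrow> complex) list \<Rightarrow> (nat \<Rightarrow> complex) \<Rightarrow> (nat \<Rightarrow> complex)" where
  "lc Ob a = (\<lambda>n. \<Sum>i<length Ob. a i * (Ob!i) n)"

definition orthonormal :: "(nat \<Rightarrow> complex) list \<Rightarrow> bool" where
  "orthonormal Ob \<longleftrightarrow> set Ob \<subseteq> l2 \<and>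
     (\<forall>i<length Ob. \<forall>j<length Ob. l2inner (Ob!i) (Ob!j) = (if i = j then 1 else 0))"

definition inspan :: "(nat \<Rightarrow> complex) list \<Rightarrow> (nat \<Rightarrow> complex) \<Rightarrow> bool" where
  "inspan Ob c \<longleftrightarrow> (\<exists>a. c = lc Ob a)"

definition subspace_l2 :: "(nat \<Rightarrow> complex) set \<Rightarrow> bool" where
  "subspace_l2 W \<longleftrightarrow> W \<subseteq> l2 \<and> (\<lambda>n. 0) \<in> W \<and>
     (\<forall>a\<in>W. \<forall>b\<in>W. \<forall>\<alpha> \<beta>. (\<lambda>n. \<alpha> * a n + \<beta> * b n) \<in> W)"

definition spans :: "(nat \<Rightarrow> complex) set \<Rightarrow> (nat \<Rightarrow> complex) list \<Rightarrow> bool" where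
  "spans W Ob \<longleftrightarrow> (\<forall>w\<in>W. w = lc Ob (\<lambda>i. l2inner w (Ob!i)))"

definition fdim :: "(nat \<Rightarrow> complex) set \<Rightarrow> bool" where
  "fdim W \<longleftrightarrow> (\<exists>Ob. orthonormal Ob \<and> set Ob \<subseteq> W \<and> spans W Ob)"

lemma subspace_l2_lincomb:
  "subspace_l2 W \<Longrightarrow> a \<in> W \<Longrightarrow> b \<in> W \<Longrightarrow> (\<lambda>n. \<alpha> * a n + \<beta> * b n) \<in> W"
  unfolding subspace_l2_def by blast

lemma subspace_l2_zero: "subspace_l2 W \<Longrightarrow> (\<lambda>n. 0) \<in> W"
  unfolding subspace_l2_def by blast

lemma subspace_l2_l2: "subspace_l2 W \<Longrightarrow> a \<in> W \<Longrightarrow> a \<in> l2"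
  unfolding subspace_l2_def by blast

lemma subspace_l2_scale: "subspace_l2 W \<Longrightarrow> a \<in> W \<Longrightarrow> (\<lambda>n. \<alpha> * a n) \<in> W"
  using subspace_l2_lincomb[of W a a \<alpha> 0] by simp

lemma subspace_l2_add: "subspace_l2 W \<Longrightarrow> a \<in> W \<Longrightarrow> b \<in> W \<Longrightarrow> (\<lambda>n. a n + b n) \<in> W"
  using subspace_l2_lincomb[of W a b 1 1] by simp

lemma subspace_l2_diff: "subspace_l2 W \<Longrightarrow> a \<in> W \<Longrightarrow> b \<in> W \<Longrightarrow> (\<lambda>n. a n - b n) \<in> W"
  using subspace_l2_lincomb[of W a b 1 "-1"] by simp

lemma subspace_l2_sum:
  assumes W: "subspace_l2 W" and g: "\<And>i. i \<in> F \<Longrightarrow> g i \<in> W"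
  shows "(\<lambda>n. \<Sum>i\<in>F. g i n) \<in> W"
  using g
proof (induct F rule: infinite_finite_induct)
  case (infinite A) then show ?case using subspace_l2_zero[OF W] by simp
next
  case empty then show ?case using subspace_l2_zero[OF W] by simp
next
  case (insert x F)
  then show ?case using subspace_l2_add[OF W, of "g x" "\<lambda>n. \<Sum>i\<in>F. g i n"] by simp
qed

lemma lc_in: 
  assumes W: "subspace_l2 W" and Ob: "set Ob \<subseteq> W"
  shows "lc Ob a \<in> W"
  unfolding lc_def
  by (rule subspace_l2_sum[OF W]) (use Ob nth_mem in \<open>auto intro!: subspace_l2_scale[OF W]\<close>)

lemma l2_subspace: "subspace_l2 l2"
  unfolding subspace_l2_def by (auto intro: l2_lincomb l2_zero)

lemma lc_l2: "set Ob \<subseteq> l2 \<Longrightarrow> lc Ob a \<in> l2"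
  by (rule lc_in[OF l2_subspace])

lemma l2inner_sum_left:
  assumes g: "\<And>i. i \<in> F \<Longrightarrow> g i \<in> l2" and c: "c \<in> l2"
  shows "l2inner (\<lambda>n. \<Sum>i\<in>F. g i n) c = (\<Sum>i\<in>F. l2inner (g i) c)"
  using g
proof (induct F rule: infinite_finite_induct)
  case (infinite A) then show ?case by simp
next
  case empty then show ?case by simp
next
  case (insert x F)
  have "l2inner (\<lambda>n. \<Sum>i\<in>insert x F. g i n) c = l2inner (\<lambda>n. g x n + (\<Sum>i\<in>F. g i n)) c"
    using insert by simp
  also have "\<dots> = l2inner (g x) c + l2inner (\<lambda>n. \<Sum>i\<in>F. g i n) c"
    using insert c by (intro l2inner_add_left l2_sum) auto
  finally show ?case using insert by simp
qed

lemma l2inner_lc_left: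
  assumes Ob: "set Ob \<subseteq> l2" and c: "c \<in> l2"
  shows "l2inner (lc Ob a) c = (\<Sum>i<length Ob. a i * l2inner (Ob!i) c)"
proof -
  have "l2inner (lc Ob a) c = (\<Sum>i<length Ob. l2inner (\<lambda>n. a i * (Ob!i) n) c)"
    unfolding lc_def using Ob c nth_mem by (intro l2inner_sum_left l2_scale) auto
  also have "\<dots> = (\<Sum>i<length Ob. a i * l2inner (Ob!i) c)"
    using Ob c nth_mem by (intro sum.cong refl l2inner_scale_left) auto
  finally show ?thesis .
qed

lemma orthonormal_l2: "orthonormal Ob \<Longrightarrow> set Ob \<subseteq> l2"
  unfolding orthonormal_def by blast

lemma orthonormal_inner: "orthonormal Ob \<Longrightarrow> i < length Ob \<Longrightarrow> j < length Ob \<Longrightarrow>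
   l2inner (Ob!i) (Ob!j) = (if i = j then 1 else 0)"
  unfolding orthonormal_def by blast

lemma l2inner_lc_orth:
  assumes Ob: "orthonormal Ob" and j: "j < length Ob"
  shows "l2inner (lc Ob a) (Ob!j) = a j"
proof -
  have "l2inner (lc Ob a) (Ob!j) = (\<Sum>i<length Ob. a i * l2inner (Ob!i) (Ob!j))"
    using Ob j nth_mem by (intro l2inner_lc_left orthonormal_l2) (auto dest: orthonormal_l2)
  also have "\<dots> = (\<Sum>i<length Ob. if i = j then a i else 0)"
    using Ob j by (intro sum.cong refl) (simp add: orthonormal_inner)
  also have "\<dots> = a j" using j by simp
  finally show ?thesis .
qed

lemma lc_cong: "(\<And>i. i < length Ob \<Longrightarrow> a i = b i) \<Longrightarrow> lc Ob a = lc Ob b"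
  unfolding lc_def by auto

lemma inspan_expand:
  assumes Ob: "orthonormal Ob" and c: "inspan Ob c"
  shows "c = lc Ob (\<lambda>i. l2inner c (Ob!i))"
proof -
  obtain a where a: "c = lc Ob a" using c unfolding inspan_def by blast
  have "lc Ob a = lc Ob (\<lambda>i. l2inner (lc Ob a) (Ob!i))"
    by (rule lc_cong) (simp add: l2inner_lc_orth[OF Ob])
  then show ?thesis using a by simp
qed

lemma lc_append: "lc (Ob @ [v]) a = (\<lambda>n. lc Ob a n + a (length Ob) * v n)"
  unfolding lc_def by (simp add: nth_append)

lemma inspan_append: "inspan Ob c \<Longrightarrow> inspan (Ob @ [v]) c"
proof -
  assume "inspan Ob c"
  then obtain a where a: "c = lc Ob a" unfolding inspan_def by blast
  have "lc (Ob @ [v]) (\<lambda>i. if i < length Ob then a i else 0) = lc Ob a"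
    unfolding lc_append by (simp add: lc_def)
  then show ?thesis using a unfolding inspan_def by metis
qed

lemma inspan_lincomb:
  "inspan Ob a \<Longrightarrow> inspan Ob b \<Longrightarrow> inspan Ob (\<lambda>n. \<alpha> * a n + \<beta> * b n)"
proof -
  assume "inspan Ob a" "inspan Ob b"
  then obtain x y where x: "a = lc Ob x" and y: "b = lc Ob y" unfolding inspan_def by blast
  have "(\<lambda>n. \<alpha> * a n + \<beta> * b n) = lc Ob (\<lambda>i. \<alpha> * x i + \<beta> * y i)"
    unfolding x y lc_def by (auto simp: sum_distrib_left sum.distrib algebra_simps)
  then show ?thesis unfolding inspan_def by blast
qed

lemma inspan_last: "inspan (Ob @ [v]) v"
proof -
  have "lc (Ob @ [v]) (\<lambda>i. if i = length Ob then 1 else 0) = v"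
    unfolding lc_append by (simp add: lc_def)
  then show ?thesis unfolding inspan_def by metis
qed

lemma orthonormal_append:
  assumes Ob: "orthonormal Ob" and v: "v \<in> l2" and vv: "l2inner v v = 1"
    and vO: "\<And>j. j < length Ob \<Longrightarrow> l2inner v (Ob!j) = 0"
  shows "orthonormal (Ob @ [v])"
  unfolding orthonormal_def
proof (intro conjI allI impI)
  show "set (Ob @ [v]) \<subseteq> l2" using orthonormal_l2[OF Ob] v by auto
  fix i j assume i: "i < length (Ob @ [v])" and j: "j < length (Ob @ [v])"
  have Ov: "l2inner (Ob!j) v = 0" if "j < length Ob" for j
    using l2inner_conj[OF v, of "Ob!j"] vO[OF that] orthonormal_l2[OF Ob] nth_mem that by auto
  show "l2inner ((Ob @ [v]) ! i) ((Ob @ [v]) ! j) = (if i = j then 1 else 0)"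
    using i j Ob vv vO Ov by (auto simp: nth_append orthonormal_inner less_Suc_eq)
qed

lemma gs_extend:
  assumes W: "subspace_l2 W" and Ob: "orthonormal Ob" and OW: "set Ob \<subseteq> W"
    and w: "w \<in> W" and nw: "\<not> inspan Ob w"
  shows "\<exists>v\<in>W. orthonormal (Ob @ [v]) \<and> inspan (Ob @ [v]) w"
proof -
  define p where "p = lc Ob (\<lambda>i. l2inner w (Ob!i))"
  define r where "r = (\<lambda>n. w n - p n)"
  have pW: "p \<in> W" unfolding p_def by (rule lc_in[OF W OW])
  have rW: "r \<in> W" unfolding r_def by (rule subspace_l2_diff[OF W w pW])
  have rl2: "r \<in> l2" by (rule subspace_l2_l2[OF W rW])
  have wl2: "w \<in> l2" by (rule subspace_l2_l2[OF W w])
  have pl2: "p \<in> l2" by (rule subspace_l2_l2[OF W pW])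
  have rO: "l2inner r (Ob!j) = 0" if j: "j < length Ob" for j
  proof -
    have Oj: "Ob!j \<in> l2" using orthonormal_l2[OF Ob] j nth_mem by blast
    have "l2inner r (Ob!j) = l2inner w (Ob!j) - l2inner p (Ob!j)"
      unfolding r_def by (rule l2inner_diff_left[OF wl2 pl2 Oj])
    also have "l2inner p (Ob!j) = l2inner w (Ob!j)" unfolding p_def by (rule l2inner_lc_orth[OF Ob j])
    finally show ?thesis by simp
  qed
  have rne: "r \<noteq> (\<lambda>n. 0)"
  proof
    assume "r = (\<lambda>n. 0)"
    then have "w = p" unfolding r_def by (auto simp: fun_eq_iff)
    then show False using nw unfolding inspan_def p_def by blast
  qed
  define \<rho> where "\<rho> = l2norm r"
  have \<rho>: "\<rho> > 0" unfolding \<rho>_def using rne l2norm_eq_0[OF rl2] l2norm_nonneg[OF rl2] by force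
  define v where "v = (\<lambda>n. complex_of_real (1 / \<rho>) * r n)"
  have vW: "v \<in> W" unfolding v_def by (rule subspace_l2_scale[OF W rW])
  have vl2: "v \<in> l2" by (rule subspace_l2_l2[OF W vW])
  have vv: "l2inner v v = 1"
  proof -
    define k where "k = complex_of_real (1/\<rho>)"
    have v': "v = (\<lambda>n. k * r n)" unfolding v_def k_def ..
    have "l2inner v v = k * l2inner r (\<lambda>n. k * r n)"
      unfolding v' by (rule l2inner_scale_left[OF rl2 l2_scale[OF rl2]])
    also have "l2inner r (\<lambda>n. k * r n) = cnj k * l2inner r r"
      by (rule l2inner_scale_right[OF rl2 rl2])
    finally have
 "l2inner v v = complex_of_real (1/\<rho>) * cnj (complex_of_real (1/\<rho>)) * l2inner r r"
      unfolding k_def v' by (simp add: mult.assoc)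

    also have "l2inner r r = complex_of_real (\<rho>\<^sup>2)" unfolding \<rho>_def by (rule l2inner_self[OF rl2])
    finally show ?thesis using \<rho> by (simp add: power2_eq_square flip: of_real_mult)
  qed
  have vO: "l2inner v (Ob!j) = 0" if "j < length Ob" for j
    unfolding v_def using rO[OF that] rl2 orthonormal_l2[OF Ob] nth_mem that
    by (subst l2inner_scale_left) auto
  have on: "orthonormal (Ob @ [v])" by (rule orthonormal_append[OF Ob vl2 vv vO])
  have "w = (\<lambda>n. 1 * p n + complex_of_real \<rho> * v n)"
    unfolding v_def r_def using \<rho> by (auto simp: fun_eq_iff)
  moreover have "inspan (Ob @ [v]) (\<lambda>n. 1 * p n + complex_of_real \<rho> * v n)"
    by (rule inspan_lincomb[OF inspan_append inspan_last]) (auto simp: inspan_def p_def)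
  ultimately show ?thesis using vW on by auto
qed


lemma not_fdim_step:
  assumes W: "subspace_l2 W" and nf: "\<not> fdim W" and Ob: "orthonormal Ob" and OW: "set Ob \<subseteq> W"
  shows "\<exists>v\<in>W. orthonormal (Ob @ [v])"
proof -
  have "\<not> spans W Ob" using nf Ob OW unfolding fdim_def by blast
  then obtain w where w: "w \<in> W" and ne: "w \<noteq> lc Ob (\<lambda>i. l2inner w (Ob!i))"
    unfolding spans_def by blast
  have "\<not> inspan Ob w" using inspan_expand[OF Ob] ne by blast
  then show ?thesis using gs_extend[OF W Ob OW w] by blast
qed

lemma not_fdim_seq:
  assumes W: "subspace_l2 W" and nf: "\<not> fdim W"
  shows "\<exists>u::nat \<Rightarrow> nat \<Rightarrow> complex. (\<forall>k. u k \<in> W) \<and> (\<forall>k l. l2inner (u k) (u l) = (if k = l then 1 else 0))"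

proof -
  have ex: "\<forall>Ob. \<exists>v. orthonormal Ob \<and> set Ob \<subseteq> W \<longrightarrow> v \<in> W \<and> orthonormal (Ob @ [v])"
  proof
    fix Ob
    show "\<exists>v. orthonormal Ob \<and> set Ob \<subseteq> W \<longrightarrow> v \<in> W \<and> orthonormal (Ob @ [v])"
    proof (cases "orthonormal Ob \<and> set Ob \<subseteq> W")
      case True
      then obtain v where "v \<in> W" "orthonormal (Ob @ [v])" using not_fdim_step[OF W nf] by auto
      then show ?thesis by auto
    next
      case False then show ?thesis by auto
    qed
  qed
  from choice[OF ex] obtain nxt where nxt0: "\<forall>Ob. orthonormal Ob \<and> set Ob \<subseteq> W \<longrightarrow> nxt Ob \<in> W \<and> orthonormal (Ob @ [nxt Ob])"
    by auto
  have nxt: "\<And>Ob. orthonormal Ob \<Longrightarrow> set Ob \<subseteq> W \<Longrightarrow> nxt Ob \<in> W \<and> orthonormal (Ob @ [nxt Ob])"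
    using nxt0 by simp

  define gs where "gs = rec_nat [] (\<lambda>n L. L @ [nxt L])"
  have gs0: "gs 0 = []" unfolding gs_def by simp
  have gsS: "gs (Suc n) = gs n @ [nxt (gs n)]" for n unfolding gs_def by simp
  have P: "orthonormal (gs n) \<and> set (gs n) \<subseteq> W \<and> length (gs n) = n" for n
  proof (induct n)
    case 0 then show ?case by (simp add: gs0 orthonormal_def)
  next
    case (Suc n)
    then have ho: "orthonormal (gs n)" and hs: "set (gs n) \<subseteq> W" and hl: "length (gs n) = n" by auto
    have h: "nxt (gs n) \<in> W \<and> orthonormal (gs n @ [nxt (gs n)])" by (rule nxt[OF ho hs])
    have he: "gs (Suc n) = gs n @ [nxt (gs n)]" by (rule gsS)
    show ?case unfolding he using h hs hl by auto



  qed
  have pre: "gs (n + k) ! i = gs n ! i" if "i < n" for n k i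
  proof (induct k)
    case 0 then show ?case by simp
  next
    case (Suc k)
    have "i < length (gs (n + k))" using P[of "n + k"] that by simp
    then show ?case using Suc by (simp add: gsS nth_append)
  qed
  define u where "u k = gs (Suc k) ! k" for k
  have uN: "u k = gs N ! k" if kN: "k < N" for k N
  proof -
    obtain j where N: "N = Suc k + j" using kN less_iff_Suc_add[of k N] by auto
    have "gs (Suc k + j) ! k = gs (Suc k) ! k" by (rule pre) simp
    then show ?thesis unfolding u_def N by simp
  qed
  have uW: "u k \<in> W" for k unfolding u_def using P[of "Suc k"] nth_mem[of k "gs (Suc k)"] by auto
  have uo: "l2inner (u k) (u l) = (if k = l then 1 else 0)" for k l
  proof -
    define N where "N = Suc (max k l)"
    have "u k = gs N ! k" "u l = gs N ! l" unfolding N_def by (auto intro: uN)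
    moreover have "k < length (gs N)" "l < length (gs N)" using P[of N] unfolding N_def by auto
    ultimately show ?thesis using P[of N] by (simp add: orthonormal_inner)
  qed
  have "(\<forall>k. u k \<in> W) \<and> (\<forall>k l. l2inner (u k) (u l) = (if k = l then 1 else 0))"
    using uW uo by simp
  then show ?thesis by blast


qed

lemma orth_dist:

  assumes a: "a \<in> l2" and b: "b \<in> l2" and aa: "l2inner a a = 1" and bb: "l2inner b b = 1"
    and ab: "l2inner a b = 0"
  shows "l2norm (\<lambda>n. a n - b n) = sqrt 2"
proof -
  have ba: "l2inner b a = 0" using l2inner_conj[OF a b] ab by simp
  have d: "(\<lambda>n. a n - b n) \<in> l2" by (rule l2_diff[OF a b])
  have "l2inner (\<lambda>n. a n - b n) (\<lambda>n. a n - b n) = l2inner a (\<lambda>n. a n - b n) - l2inner b (\<lambda>n. a n - b n)"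
    by (rule l2inner_diff_left[OF a b d])
  also have "\<dots> = 2" using a b aa bb ab ba by (simp add: l2inner_diff_right)
  finally have h: "complex_of_real ((l2norm (\<lambda>n. a n - b n))\<^sup>2) = 2" using l2inner_self[OF d] by simp
  have "complex_of_real ((l2norm (\<lambda>n. a n - b n))\<^sup>2) = complex_of_real 2" using h by simp
  then have e: "(l2norm (\<lambda>n. a n - b n))\<^sup>2 = 2" by (simp only: of_real_eq_iff)
  have "sqrt 2 = l2norm (\<lambda>n. a n - b n)"
    by (rule real_sqrt_unique) (use e l2norm_nonneg[OF d] in auto)
  then show ?thesis by simp
qed

lemma orth_seq_noconv:
  assumes ul2: "\<And>k. u k \<in> l2" and orth: "\<And>k l. l2inner (u k) (u l) = (if k = l then 1 else 0)"
    and r: "strict_mono r" and y: "y \<in> l2"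
    and lim: "(\<lambda>k. l2norm (\<lambda>n. u (r k) n - y n)) \<longlonglongrightarrow> 0"
  shows False
proof -
  have "\<exists>N. \<forall>k\<ge>N. norm (l2norm (\<lambda>n. u (r k) n - y n) - 0) < 1/2"
    by (rule LIMSEQ_D[OF lim]) simp
  then obtain N where N: "\<And>k. k \<ge> N \<Longrightarrow> \<bar>l2norm (\<lambda>n. u (r k) n - y n)\<bar> < 1/2" by auto
  have "r N < r (Suc N)" using r by (simp add: strict_mono_def)
  then have ne: "r N \<noteq> r (Suc N)" by simp
  have "l2norm (\<lambda>n. u (r N) n - u (r (Suc N)) n) = sqrt 2"
    by (rule orth_dist[OF ul2 ul2])
      (use orth[of "r N" "r N"] orth[of "r (Suc N)" "r (Suc N)"] orth[of "r N" "r (Suc N)"] ne in auto)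
  then have "sqrt 2 = l2norm (\<lambda>n. u (r N) n - u (r (Suc N)) n)" by simp

  also have "\<dots> \<le> l2norm (\<lambda>n. u (r N) n - y n) + l2norm (\<lambda>n. y n - u (r (Suc N)) n)"
    by (rule l2norm_diff_triangle[OF ul2 y ul2])
  also have "\<dots> < 1/2 + 1/2"
    using N[of N] N[of "Suc N"] l2norm_diff_commute[of y "u (r (Suc N))"] by auto
  finally have "sqrt 2 < 1" by simp
  then show False by simp
qed

lemma multi_bw:
  fixes d :: "nat \<Rightarrow> nat \<Rightarrow> complex"
  assumes "\<And>k i. i < m \<Longrightarrow> cmod (d k i) \<le> C"
  shows "\<exists>r L. strict_mono r \<and> (\<forall>i<m. (\<lambda>k. d (r k) i) \<longlonglongrightarrow> L i)"
  using assms
proof (induct m)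
  case 0 then show ?case using strict_mono_id by blast
next
  case (Suc m)
  then obtain r L where r: "strict_mono r" and L: "\<forall>i<m. (\<lambda>k. d (r k) i) \<longlonglongrightarrow> L i" by auto
  have "bounded (range (\<lambda>k. d (r k) m))"
    unfolding bounded_iff using Suc.prems[of m] by auto
  then obtain l r2 where r2: "strict_mono r2" and l: "((\<lambda>k. d (r k) m) \<circ> r2) \<longlonglongrightarrow> l"
    using bounded_imp_convergent_subsequence by blast
  have "strict_mono (r \<circ> r2)" using r r2 by (rule strict_mono_o)
  moreover have "\<forall>i<Suc m. (\<lambda>k. d ((r \<circ> r2) k) i) \<longlonglongrightarrow> (L(m := l)) i"
  proof (intro allI impI)
    fix i assume i: "i < Suc m"
    show "(\<lambda>k. d ((r \<circ> r2) k) i) \<longlonglongrightarrow> (L(m := l)) i"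
    proof (cases "i = m")
      case True then show ?thesis using l by (simp add: o_def)
    next
      case False
      then have "(\<lambda>k. d (r k) i) \<longlonglongrightarrow> L i" using L i by auto
      then have "((\<lambda>k. d (r k) i) \<circ> r2) \<longlonglongrightarrow> L i" using r2 by (rule LIMSEQ_subseq_LIMSEQ)
      then show ?thesis using False by (simp add: o_def)
    qed
  qed
  ultimately show ?case by blast
qed

lemma orthonormal_norm1:
  assumes Ob: "orthonormal Ob" and i: "i < length Ob"
  shows "l2norm (Ob!i) = 1"
proof -
  have l: "Ob!i \<in> l2" using orthonormal_l2[OF Ob] i nth_mem by blast
  have "complex_of_real ((l2norm (Ob!i))\<^sup>2) = 1"
    using l2inner_self[OF l] orthonormal_inner[OF Ob i i] by simp
  then have "(l2norm (Ob!i))\<^sup>2 = 1" by (metis of_real_eq_1_iff)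
  then show ?thesis using l2norm_nonneg[OF l] by (simp add: power2_eq_1_iff)
qed

lemma l2norm_lc_le:
  assumes Ob: "orthonormal Ob"
  shows "l2norm (lc Ob a) \<le> (\<Sum>i<length Ob. cmod (a i))"
proof -
  have "l2norm (lc Ob a) \<le> (\<Sum>i<length Ob. l2norm (\<lambda>n. a i * (Ob!i) n))"
    unfolding lc_def using orthonormal_l2[OF Ob] nth_mem by (intro l2norm_sum l2_scale) auto
  also have "\<dots> = (\<Sum>i<length Ob. cmod (a i))"
  proof (intro sum.cong refl)
    fix i assume i: "i \<in> {..<length Ob}"
    then have l: "Ob!i \<in> l2" using orthonormal_l2[OF Ob] nth_mem by auto
    show "l2norm (\<lambda>n. a i * (Ob!i) n) = cmod (a i)"
      using l2norm_scale[OF l, of "a i"] orthonormal_norm1[OF Ob, of i] i by simp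
  qed
  finally show ?thesis .
qed

lemma lc_diff: "(\<lambda>n. lc Ob a n - lc Ob b n) = lc Ob (\<lambda>i. a i - b i)"
  unfolding lc_def by (auto simp: sum_subtractf algebra_simps)

lemma fdim_compact:
  fixes y :: "nat \<Rightarrow> nat \<Rightarrow> complex"
  assumes
 W: "subspace_l2 W" and fd: "fdim W"
    and y: "\<And>k. y k \<in> W" and yb: "\<And>k. l2norm (y k) \<le> C"
  shows "\<exists>r z. strict_mono r \<and> z \<in> l2 \<and> (\<lambda>k. l2norm (\<lambda>n. y (r k) n - z n)) \<longlonglongrightarrow> 0"
proof -
  obtain Ob where Ob: "orthonormal Ob" and OW: "set Ob \<subseteq> W" and sp: "spans W Ob"
    using fd unfolding fdim_def by blast
  define d where "d k i = l2inner (y k) (Ob!i)" for k i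
  have yl: "y k \<in> l2" for k using subspace_l2_l2[OF W y] .
  have db: "cmod (d k i) \<le> C" if "i < length Ob" for k i
  proof -
    have "cmod (d k i) \<le> l2norm (y k) * l2norm (Ob!i)"
      unfolding d_def using orthonormal_l2[OF Ob] nth_mem that by (intro cauchy_schwarz_l2 yl) auto
    also have "\<dots> = l2norm (y k)" using orthonormal_norm1[OF Ob that] by simp
    finally show ?thesis using yb[of k] by simp
  qed
  obtain r L where r: "strict_mono r" and L: "\<forall>i<length Ob. (\<lambda>k. d (r k) i) \<longlonglongrightarrow> L i"
    using multi_bw[of "length Ob" d C] db by blast
  define z where "z = lc Ob L"
  have zl: "z \<in> l2" unfolding z_def by (rule lc_l2[OF orthonormal_l2[OF Ob]])
  have yk: "y k = lc Ob (d k)" for k using sp y unfolding spans_def d_def by blast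
  have bound: "l2norm (\<lambda>n. y (r k) n - z n) \<le> (\<Sum>i<length Ob. cmod (d (r k) i - L i))" for k
  proof -
    have "(\<lambda>n. y (r k) n - z n) = lc Ob (\<lambda>i. d (r k) i - L i)"
      unfolding z_def using yk[of "r k"] lc_diff[of Ob "d (r k)" L] by simp
    then show ?thesis using l2norm_lc_le[OF Ob] by simp
  qed
  have g0: "(\<lambda>k. \<Sum>i<length Ob. cmod (d (r k) i - L i)) \<longlonglongrightarrow> 0"
  proof (rule tendsto_null_sum)
    fix i assume "i \<in> {..<length Ob}"
    then have "(\<lambda>k. d (r k) i) \<longlonglongrightarrow> L i" using L by auto
    then have "(\<lambda>k. d (r k) i - L i) \<longlonglongrightarrow> 0" by (rule LIM_zero)
    then show "(\<lambda>k. cmod (d (r k) i - L i)) \<longlonglongrightarrow> 0" by (rule tendsto_norm_zero)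
  qed
  have "(\<lambda>k. l2norm (\<lambda>n. y (r k) n - z n)) \<longlonglongrightarrow> 0"
  proof (rule real_tendsto_sandwich[OF _ _ tendsto_const g0])
    show "\<forall>\<^sub>F k in sequentially. 0 \<le> l2norm (\<lambda>n. y (r k) n - z n)"
      using l2norm_nonneg[OF l2_diff[OF yl zl]] by simp
    show "\<forall>\<^sub>F k in sequentially. l2norm (\<lambda>n. y (r k) n - z n) \<le> (\<Sum>i<length Ob. cmod (d (r k) i - L i))"
      using bound by simp
  qed
  then show ?thesis using r zl by blast
qed

lemma subspace_vanish:
  assumes V: "subspace_l2 V"
  shows "subspace_l2 {c \<in> V. c m = 0}"
  using V unfolding subspace_l2_def by auto

lemma not_fdim_restrict:
  assumes V: "subspace_l2 V" and nf: "\<not> fdim V"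
  shows "\<not> fdim {c \<in> V. c m = 0}"
proof
  assume "fdim {c \<in> V. c m = 0}"
  then obtain Ob where Ob: "orthonormal Ob" and OW: "set Ob \<subseteq> {c \<in> V. c m = 0}"
    and sp: "spans {c \<in> V. c m = 0} Ob"
    unfolding fdim_def by blast
  have OV: "set Ob \<subseteq> V" using OW by auto
  show False
  proof (cases "\<forall>c\<in>V. c m = 0")
    case True
    then have "{c \<in> V. c m = 0} = V" by auto
    then show False using nf Ob OW sp unfolding fdim_def by auto
  next
    case False
    then obtain c0 where c0: "c0 \<in> V" and c0m: "c0 m \<noteq> 0" by auto
    define e where "e = (\<lambda>n. (1 / c0 m) * c0 n)"
    have eV: "e \<in> V" unfolding e_def by (rule subspace_l2_scale[OF V c0])
    have em: "e m = 1" using c0m by (simp add: e_def)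
    obtain Ob' where Ob': "orthonormal Ob'" and OV': "set Ob' \<subseteq> V"
      and sub: "\<And>c. inspan Ob c \<Longrightarrow> inspan Ob' c" and ei: "inspan Ob' e"
    proof (cases "inspan Ob e")
      case True then show ?thesis using that[OF Ob OV] by blast
    next
      case False
      then obtain v where "v \<in> V" "orthonormal (Ob @ [v])" "inspan (Ob @ [v]) e"
        using gs_extend[OF V Ob OV eV] by blast
      then show ?thesis using that[of "Ob @ [v]"] OV inspan_append by auto
    qed
    have "spans V Ob'"
      unfolding spans_def
    proof
      fix c assume c: "c \<in> V"
      define c' where "c' = (\<lambda>n. 1 * c n + (- c m) * e n)"
      have c'V: "c' \<in> V" unfolding c'_def by (rule subspace_l2_lincomb[OF V c eV])
      have "c' m = 0" unfolding c'_def using em by simp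
      then have "c' = lc Ob (\<lambda>i. l2inner c' (Ob!i))" using sp c'V unfolding spans_def by blast
      then have "inspan Ob c'" unfolding inspan_def by blast
      then have i1: "inspan Ob' c'" by (rule sub)
      have "c = (\<lambda>n. 1 * c' n + c m * e n)" unfolding c'_def by auto
      moreover have "inspan Ob' (\<lambda>n. 1 * c' n + c m * e n)" by (rule inspan_lincomb[OF i1 ei])
      ultimately have "inspan Ob' c" by simp
      then show "c = lc Ob' (\<lambda>i. l2inner c (Ob'!i))" by (rule inspan_expand[OF Ob'])
    qed
    then show False using nf Ob' OV' unfolding fdim_def by blast
  qed
qed

lemma not_fdim_vanish:
  assumes V: "subspace_l2 V" and nf: "\<not> fdim V" and J: "finite J"
  shows "\<not> fdim {c \<in> V. \<forall>j\<in>J. c j = 0} \<and> subspace_l2 {c \<in> V. \<forall>j\<in>J. c j = 0}"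
  using J
proof (induct J rule: finite_induct)
  case empty then show ?case using V nf by simp
next
  case (insert m J)
  have eq: "{c \<in> V. \<forall>j\<in>insert m J. c j = 0} = {c \<in> {c \<in> V. \<forall>j\<in>J. c j = 0}. c m = 0}" by auto
  show ?case unfolding eq using insert not_fdim_restrict subspace_vanish by blast
qed

lemma not_fdim_nonzero:
  assumes W: "subspace_l2 W" and nf: "\<not> fdim W"
  shows "\<exists>c\<in>W. c \<noteq> (\<lambda>n. 0)"
proof (rule ccontr)
  assume "\<not> (\<exists>c\<in>W. c \<noteq> (\<lambda>n. 0))"
  then have "spans W []" unfolding spans_def lc_def by auto
  moreover have "orthonormal []" by (simp add: orthonormal_def)
  ultimately show False using nf unfolding fdim_def by auto
qed


definition restr :: "nat set \<Rightarrow> (nat \<Rightarrow> 'a::chilbert) \<Rightarrow> nat \<Rightarrow> 'a" where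
  "restr I f = (\<lambda>n. if n \<in> I then f n else 0)"

lemma frame_on_iff: "frame_on I f \<longleftrightarrow> frame (restr I f)"
proof -
  have e: "(\<lambda>n. if n \<in> UNIV then (cmod (cinner x (restr I f n)))\<^sup>2 else 0) =
        (\<lambda>n. if n \<in> I then (cmod (cinner x (f n)))\<^sup>2 else 0)" for x
    by (auto simp: restr_def fun_eq_iff)
  show ?thesis unfolding frame_def frame_on_def e ..
qed

lemma frame_iff: "frame f \<longleftrightarrow> (\<exists>A B. 0 < A \<and> 0 < B \<and> (\<forall>x. summable (\<lambda>n. (cmod (cinner x (f n)))\<^sup>2) \<and>
     A * (norm x)\<^sup>2 \<le> (\<Sum>n. (cmod (cinner x (f n)))\<^sup>2) \<and> (\<Sum>n. (cmod (cinner x (f n)))\<^sup>2) \<le> B * (norm x)\<^sup>2))"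
  unfolding frame_def frame_on_def by simp

lemma frame_seq_ex:
  assumes "frame g"
  shows "\<exists>A B. frame_seq g B A"
proof -
  obtain A B where A: "0 < A" and B: "0 < B" and h: "\<And>x. summable (\<lambda>n. (cmod (cinner x (g n)))\<^sup>2) \<and>
     A * (norm x)\<^sup>2 \<le> (\<Sum>n. (cmod (cinner x (g n)))\<^sup>2) \<and> (\<Sum>n. (cmod (cinner x (g n)))\<^sup>2) \<le> B * (norm x)\<^sup>2"
    using assms unfolding frame_iff by blast
  have "frame_seq g B (min A B)"
  proof (intro frame_seq.intro bessel_seq.intro frame_seq_axioms.intro)
    show "0 < B" by (rule B)
    show "summable (\<lambda>n. (cmod (cinner x (g n)))\<^sup>2)" for x using h by blast
    show "(\<Sum>n. (cmod (cinner x (g n)))\<^sup>2) \<le> B * (norm x)\<^sup>2" for x using h by blast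
    show "0 < min A B" using A B by simp
    show "min A B \<le> B" by simp
    show "min A B * (norm x)\<^sup>2 \<le> (\<Sum>n. (cmod (cinner x (g n)))\<^sup>2)" for x
    proof -
      have "min A B * (norm x)\<^sup>2 \<le> A * (norm x)\<^sup>2" by (intro mult_right_mono) auto
      then show ?thesis using h[of x] by linarith
    qed
  qed
  then show ?thesis by blast
qed

lemma frame_seq_frame: "frame_seq g B A \<Longrightarrow> frame g"
  unfolding frame_iff frame_seq_def frame_seq_axioms_def bessel_seq_def by blast

definition Kf :: "(nat \<Rightarrow> 'a::chilbert) \<Rightarrow> (nat \<Rightarrow> complex) set" where
  "Kf f = {c \<in> l2. \<forall>x. l2inner (analysis_op f x) c = 0}"

lemma (in bessel_seq) K_subspace: "subspace_l2 (Kf f)"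
  unfolding subspace_l2_def Kf_def
proof (intro conjI ballI allI)
  show "{c \<in> l2. \<forall>x. l2inner (U x) c = 0} \<subseteq> l2" by auto
  show "(\<lambda>n. 0) \<in> {c \<in> l2. \<forall>x. l2inner (U x) c = 0}" by (simp add: l2_zero)
  fix a b \<alpha> \<beta>
  assume a: "a \<in> {c \<in> l2. \<forall>x. l2inner (U x) c = 0}" and b: "b \<in> {c \<in> l2. \<forall>x. l2inner (U x) c = 0}"
  have "l2inner (U x) (\<lambda>n. \<alpha> * a n + \<beta> * b n) = 0" for x
    using a b U_l2[of x] by (simp add: l2inner_add_right l2_scale l2inner_scale_right)
  then show "(\<lambda>n. \<alpha> * a n + \<beta> * b n) \<in> {c \<in> l2. \<forall>x. l2inner (U x) c = 0}"
    using a b by (simp add: l2_lincomb)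
qed

lemma summable_restr:
  assumes "summable (\<lambda>n. (cmod (cinner x (f n)))\<^sup>2)"
  shows "summable (\<lambda>n. (cmod (cinner x (restr I f n)))\<^sup>2)"
proof (rule summable_comparison_test'[OF assms])
  show "norm ((cmod (cinner x (restr I f n)))\<^sup>2) \<le> (cmod (cinner x (f n)))\<^sup>2" for n
    by (simp add: restr_def)
qed

lemma frame_restr_mono:
  assumes f: "frame f" and I: "frame (restr I f)" and sub: "I \<subseteq> I'"
  shows "frame (restr I' f)"
proof -
  obtain A B where fs: "frame_seq f B A" using frame_seq_ex[OF f] by blast
  obtain A' B' where Is: "frame_seq (restr I f) B' A'" using frame_seq_ex[OF I] by blast
  have sf: "summable (\<lambda>n. (cmod (cinner x (f n)))\<^sup>2)" for x
    using fs unfolding frame_seq_def bessel_seq_def by blast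
  have s: "summable (\<lambda>n. (cmod (cinner x (restr J f n)))\<^sup>2)" for x J
    by (rule summable_restr[OF sf])
  show ?thesis unfolding frame_iff
  proof (intro exI conjI allI)
    show "0 < A'" using Is unfolding frame_seq_def frame_seq_axioms_def by blast
    show "0 < B" using fs unfolding frame_seq_def bessel_seq_def by blast
    fix x
    show "summable (\<lambda>n. (cmod (cinner x (restr I' f n)))\<^sup>2)" by (rule s)
    have "A' * (norm x)\<^sup>2 \<le> (\<Sum>n. (cmod (cinner x (restr I f n)))\<^sup>2)"
      using Is unfolding frame_seq_def frame_seq_axioms_def by blast
    also have "\<dots> \<le> (\<Sum>n. (cmod (cinner x (restr I' f n)))\<^sup>2)"
      by (rule suminf_le[OF _ s s]) (use sub in \<open>auto simp: restr_def\<close>)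
    finally show "A' * (norm x)\<^sup>2 \<le> (\<Sum>n. (cmod (cinner x (restr I' f n)))\<^sup>2)" .
    have "(\<Sum>n. (cmod (cinner x (restr I' f n)))\<^sup>2) \<le> (\<Sum>n. (cmod (cinner x (f n)))\<^sup>2)"
      by (rule suminf_le[OF _ s sf]) (auto simp: restr_def)
    also have "\<dots> \<le> B * (norm x)\<^sup>2" using fs unfolding frame_seq_def bessel_seq_def by blast
    finally show "(\<Sum>n. (cmod (cinner x (restr I' f n)))\<^sup>2) \<le> B * (norm x)\<^sup>2" .
  qed
qed


lemma (in frame_seq) delete_one:
  fixes h :: "nat \<Rightarrow> 'a"
  assumes hm: "h m = 0" and hn: "\<And>n. n \<noteq> m \<Longrightarrow> h n = f n"
    and c: "c \<in> l2" and orth: "\<And>x. l2inner (U x) c = 0" and cm: "c m \<noteq> 0"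
  shows "frame h"
proof -
  define K where "K = (l2norm c / cmod (c m))\<^sup>2"
  have K0: "0 \<le> K" unfolding K_def by simp
  have key: "summable (\<lambda>n. (cmod (cinner x (h n)))\<^sup>2) \<and>
      (\<Sum>n. (cmod (cinner x (f n)))\<^sup>2) \<le> (1 + K) * (\<Sum>n. (cmod (cinner x (h n)))\<^sup>2) \<and>
      (\<Sum>n. (cmod (cinner x (h n)))\<^sup>2) \<le> (\<Sum>n. (cmod (cinner x (f n)))\<^sup>2)" for x
  proof -
    define a where "a = U x"
    define ah where "ah = (\<lambda>n. cinner x (h n))"
    have ah_eq: "ah n = (if n = m then 0 else a n)" for n
      unfolding ah_def a_def by (simp add: hm hn U_apply)
    have sa: "summable (\<lambda>n. (cmod (a n))\<^sup>2)" unfolding a_def U_apply by (rule bes_summable)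
    have sah: "summable (\<lambda>n. (cmod (ah n))\<^sup>2)"
      by (rule summable_comparison_test'[OF sa]) (simp add: ah_eq)
    have ahl2: "ah \<in> l2" using sah by (simp add: l2_iff)
    have al2: "a \<in> l2" using sa by (simp add: l2_iff)
    have dec: "(cmod (a n))\<^sup>2 = (cmod (ah n))\<^sup>2 + (if n = m then (cmod (a m))\<^sup>2 else 0)" for n
      by (simp add: ah_eq)
    have "(\<lambda>n. (cmod (ah n))\<^sup>2 + (if n = m then (cmod (a m))\<^sup>2 else 0)) sums
          ((\<Sum>n. (cmod (ah n))\<^sup>2) + (cmod (a m))\<^sup>2)"
      by (intro sums_add summable_sums[OF sah]) (rule sums_single[of m "\<lambda>n. (cmod (a m))\<^sup>2", simplified])
    then have sumdec: "(\<Sum>n. (cmod (a n))\<^sup>2) = (\<Sum>n. (cmod (ah n))\<^sup>2) + (cmod (a m))\<^sup>2"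
      unfolding dec[symmetric] by (simp add: sums_iff)
    have decl: "a n * cnj (c n) = ah n * cnj (c n) + (if n = m then a m * cnj (c m) else 0)" for n
      by (simp add: ah_eq)
    have "(\<lambda>n. ah n * cnj (c n) + (if n = m then a m * cnj (c m) else 0)) sums
          (l2inner ah c + a m * cnj (c m))"
      unfolding l2inner_def
      by (intro sums_add summable_sums[OF summable_l2inner[OF ahl2 c]])
         (rule sums_single[of m "\<lambda>n. a m * cnj (c m)", simplified])
    then have "l2inner a c = l2inner ah c + a m * cnj (c m)"
      unfolding l2inner_def decl[symmetric] by (simp add: sums_iff)
    then have h0: "a m * cnj (c m) + l2inner ah c = 0" using orth[of x] unfolding a_def
      by (simp only: add.commute)
    then have "a m * cnj (c m) = - l2inner ah c" by (simp only: eq_neg_iff_add_eq_0)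
    then have "cmod (a m * cnj (c m)) = cmod (- l2inner ah c)" by (rule arg_cong)
    then have "cmod (a m) * cmod (c m) = cmod (l2inner ah c)"
      by (simp only: norm_mult complex_mod_cnj norm_minus_cancel)
    also have "\<dots> \<le> l2norm ah * l2norm c" by (rule cauchy_schwarz_l2[OF ahl2 c])
    finally have am: "cmod (a m) \<le> l2norm ah * (l2norm c / cmod (c m))"
      using cm by (simp add: field_simps)
    have "(cmod (a m))\<^sup>2 \<le> (l2norm ah * (l2norm c / cmod (c m)))\<^sup>2"
      by (rule power_mono[OF am]) simp
    also have "\<dots> = K * (l2norm ah)\<^sup>2" unfolding K_def by (simp only: power_mult_distrib mult.commute)

    also have "(l2norm ah)\<^sup>2 = (\<Sum>n. (cmod (ah n))\<^sup>2)" by (rule l2norm_sq[OF ahl2])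
    finally have amK: "(cmod (a m))\<^sup>2 \<le> K * (\<Sum>n. (cmod (ah n))\<^sup>2)" .
    have pos: "0 \<le> (\<Sum>n. (cmod (ah n))\<^sup>2)" by (rule suminf_nonneg[OF sah]) simp
    show ?thesis
    proof (intro conjI)
      show "summable (\<lambda>n. (cmod (cinner x (h n)))\<^sup>2)" using sah unfolding ah_def .
      show "(\<Sum>n. (cmod (cinner x (f n)))\<^sup>2) \<le> (1 + K) * (\<Sum>n. (cmod (cinner x (h n)))\<^sup>2)"
        using sumdec amK unfolding a_def ah_def U_apply by (simp add: algebra_simps)
      show "(\<Sum>n. (cmod (cinner x (h n)))\<^sup>2) \<le> (\<Sum>n. (cmod (cinner x (f n)))\<^sup>2)"
        using sumdec unfolding a_def ah_def U_apply by simp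
    qed
  qed
  show ?thesis unfolding frame_iff
  proof (intro exI conjI allI)
    show "0 < A / (1 + K)" using A_pos K0 by simp
    show "0 < B" by (rule B_pos)
    fix x
    show "summable (\<lambda>n. (cmod (cinner x (h n)))\<^sup>2)" using key by blast
    have "A * (norm x)\<^sup>2 \<le> (1 + K) * (\<Sum>n. (cmod (cinner x (h n)))\<^sup>2)"
      using lower[of x] key[of x] by linarith
    then show "A / (1 + K) * (norm x)\<^sup>2 \<le> (\<Sum>n. (cmod (cinner x (h n)))\<^sup>2)"
      using K0 by (simp add: field_simps)
    show "(\<Sum>n. (cmod (cinner x (h n)))\<^sup>2) \<le> B * (norm x)\<^sup>2"
      using key[of x] bes_le[of x] by linarith
  qed
qed


lemma l2inner_restr:
  assumes "\<And>j. j \<in> J \<Longrightarrow> c j = 0"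
  shows "l2inner (analysis_op (restr (-J) f) x) c = l2inner (analysis_op f x) c"
proof -
  have e: "analysis_op (restr (-J) f) x n * cnj (c n) = analysis_op f x n * cnj (c n)" for n
    using assms by (cases "n \<in> J") (auto simp: analysis_op_def restr_def)
  show ?thesis unfolding l2inner_def by (rule suminf_cong) (rule e)

qed

lemma frame_Kf_subspace: "frame f \<Longrightarrow> subspace_l2 (Kf f)"
  using frame_seq_ex bessel_seq.K_subspace frame_seq_def by metis

lemma delete_step:
  assumes f: "frame f" and nf: "\<not> fdim (Kf f)" and J: "finite J" and fJ: "frame (restr (-J) f)"
  shows "\<exists>m. m \<notin> J \<and> frame (restr (-(insert m J)) f)"
proof -
  have Ksub: "subspace_l2 (Kf f)" by (rule frame_Kf_subspace[OF f])
  have V: "\<not> fdim {c \<in> Kf f. \<forall>j\<in>J. c j = 0} \<and> subspace_l2 {c \<in> Kf f. \<forall>j\<in>J. c j = 0}"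
    by (rule not_fdim_vanish[OF Ksub nf J])
  obtain c where c: "c \<in> {c \<in> Kf f. \<forall>j\<in>J. c j = 0}" and cne: "c \<noteq> (\<lambda>n. 0)"
    using not_fdim_nonzero V by blast
  obtain m where cm: "c m \<noteq> 0" using cne by auto
  have mJ: "m \<notin> J" using c cm by auto
  have cl2: "c \<in> l2" and cK: "\<And>x. l2inner (analysis_op f x) c = 0" and cJ: "\<And>j. j \<in> J \<Longrightarrow> c j = 0"
    using c unfolding Kf_def by auto
  obtain A B where gs: "frame_seq (restr (-J) f) B A" using frame_seq_ex[OF fJ] by blast
  have orth: "l2inner (analysis_op (restr (-J) f) x) c = 0" for x
    using l2inner_restr[of J c f x] cJ cK by simp
  have "frame (restr (-(insert m J)) f)"
  proof (rule frame_seq.delete_one[OF gs, of _ m, OF _ _ cl2 orth cm])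
    show "restr (- insert m J) f m = 0" by (simp add: restr_def)
    show "restr (- insert m J) f n = restr (- J) f n" if "n \<noteq> m" for n
      using that by (simp add: restr_def)
  qed
  then show ?thesis using mJ by blast
qed

lemma delete_many:
  assumes f: "frame f" and nf: "\<not> fdim (Kf f)"
  shows "\<exists>J. finite J \<and> card J = N \<and> frame (restr (-J) f)"
proof (induct N)
  case 0
  have "restr (-{}) f = f" by (simp add: restr_def fun_eq_iff)
  then show ?case using f by (intro exI[of _ "{}"]) simp
next
  case (Suc N)
  then obtain J where J: "finite J" "card J = N" "frame (restr (-J) f)" by blast
  then obtain m where "m \<notin> J" "frame (restr (-(insert m J)) f)" using delete_step[OF f nf] by blast
  then show ?case using J by (intro exI[of _ "insert m J"]) simp
qed

definition exset :: "(nat \<Rightarrow> 'a::chilbert) \<Rightarrow> enat set" where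
  "exset f = {if finite J then enat (card J) else \<infinity> | J. frame_on (- J) f}"

lemma excess_exset: "excess f = Sup (exset f)"
  unfolding excess_def exset_def ..

lemma excess_infty:
  assumes "\<And>N. \<exists>J. finite J \<and> card J = N \<and> frame (restr (-J) f)"
  shows "excess f = \<infinity>"
proof -
  have le: "enat N \<le> excess f" for N
  proof -
    obtain J where J: "finite J" "card J = N" "frame (restr (-J) f)" using assms by blast
    have "enat N \<in> exset f" unfolding exset_def using J frame_on_iff[of "-J" f] by force
    then show ?thesis unfolding excess_exset by (rule Sup_upper)
  qed
  show ?thesis
  proof (cases "excess f")
    case (enat k)
    then show ?thesis using le[of "Suc k"] by simp
  qed simp
qed

lemma excess_large:
  assumes "excess f = \<infinity>"
  shows "\<exists>J. frame (restr (-J) f) \<and> (infinite J \<or> m < card J)"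
proof (rule ccontr)
  assume "\<not> ?thesis"
  then have h: "\<And>J. frame (restr (-J) f) \<Longrightarrow> finite J \<and> card J \<le> m" by (meson not_le)
  have "Sup (exset f) \<le> enat m"
  proof (rule Sup_least)
    fix e assume "e \<in> exset f"
    then obtain J where e: "e = (if finite J then enat (card J) else \<infinity>)" and J: "frame_on (-J) f"
      unfolding exset_def by blast
    then show "e \<le> enat m" using h[of J] frame_on_iff[of "-J" f] by auto
  qed
  then show False using assms unfolding excess_exset by simp
qed


interpretation lv: vector_space "\<lambda>(a::complex) (f::nat\<Rightarrow>complex). (\<lambda>n. a * f n)"
  by unfold_locales (auto simp: fun_eq_iff algebra_simps)

lemma sum_fun_apply: "(\<Sum>i\<in>F. g i) n = (\<Sum>i\<in>F. (g i :: nat \<Rightarrow> complex) n)"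
  by (induct F rule: infinite_finite_induct) auto

lemma sum_fun_eq: "(\<Sum>i\<in>F. g i) = (\<lambda>n. \<Sum>i\<in>F. (g i :: nat \<Rightarrow> complex) n)"
  by (auto simp: fun_eq_iff sum_fun_apply)

lemma lc_lvspan: "lc Ob a \<in> lv.span (set Ob)"
proof -
  have "lc Ob a = (\<Sum>i<length Ob. (\<lambda>n. a i * (Ob!i) n))"
    unfolding lc_def sum_fun_eq ..
  also have "\<dots> \<in> lv.span (set Ob)"
    by (intro lv.span_sum lv.span_scale lv.span_base) simp
  finally show ?thesis .
qed

lemma l2inner_delta: "l2inner a (\<lambda>n. if n = j then 1 else 0) = a j"
proof -
  have "(\<lambda>n. a n * cnj (if n = j then 1 else 0)) = (\<lambda>n. if n = j then a j else 0)"
    by (auto simp: fun_eq_iff)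
  then show ?thesis unfolding l2inner_def using sums_single[of j "\<lambda>_. a j"]
    by (simp add: sums_iff)
qed

lemma delta_l2: "(\<lambda>n. if n = j then 1 else 0) \<in> l2"
  by (rule l2_finsupp) simp

lemma (in frame_seq) recon:
  "syn (U (Sinv y)) = y"
  using S_Sinv[of y] unfolding S_def .

lemma fdim_card_bound:
  assumes Ob: "orthonormal Ob" and sp: "spans W Ob"
    and J: "finite J" and d: "\<And>j. j \<in> J \<Longrightarrow> d j \<in> W"
    and dd: "\<And>i j. i \<in> J \<Longrightarrow> j \<in> J \<Longrightarrow> d j i = (if i = j then 1 else 0)"
  shows "card J \<le> length Ob"
proof -
  have inj: "inj_on d J"
  proof (rule inj_onI)
    fix x y assume "x \<in> J" "y \<in> J" "d x = d y"
    then show "x = y" using dd[of x x] dd[of x y] by (metis one_neq_zero)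
  qed
  have fin: "finite (d ` J)" using J by simp
  have ind: "lv.independent (d ` J)"
  proof (rule lv.independent_if_scalars_zero[OF fin])
    fix c x assume s: "(\<Sum>x\<in>d ` J. (\<lambda>n. c x * x n)) = 0" and x: "x \<in> d ` J"
    then obtain j where j: "j \<in> J" and xj: "x = d j" by blast
    have "0 = (\<Sum>y\<in>d ` J. (\<lambda>n. c y * y n)) j" using s by simp
    also have "\<dots> = (\<Sum>y\<in>d ` J. c y * y j)" by (rule sum_fun_apply)
    also have "\<dots> = (\<Sum>i\<in>J. c (d i) * d i j)" by (rule sum.reindex[OF inj, unfolded o_def])
    also have "\<dots> = (\<Sum>i\<in>J. if i = j then c (d j) else 0)"
      using j dd by (intro sum.cong refl) auto
    also have "\<dots> = c (d j)" using J j by simp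
    finally show "c x = 0" using xj by simp
  qed
  have sub: "d ` J \<subseteq> lv.span (set Ob)"
  proof
    fix x assume "x \<in> d ` J"
    then have "x \<in> W" using d by blast
    then have "x = lc Ob (\<lambda>i. l2inner x (Ob!i))" using sp unfolding spans_def by blast
    then show "x \<in> lv.span (set Ob)" using lc_lvspan by metis
  qed
  have "card (d ` J) \<le> card (set Ob)"
    using lv.independent_span_bound[OF _ ind sub] by simp
  also have "\<dots> \<le> length Ob" by (rule card_length)
  finally show ?thesis using card_image[OF inj] by simp
qed

lemma excess_inf_not_fdim:
  assumes f: "frame f" and ex: "excess f = \<infinity>"
  shows "\<not> fdim (Kf f)"
proof
  assume "fdim (Kf f)"
  then obtain Ob where Ob: "orthonormal Ob" and OK: "set Ob \<subseteq> Kf f" and sp: "spans (Kf f) Ob"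
    unfolding fdim_def by blast
  define m where "m = length Ob"
  obtain J0 where J0: "frame (restr (-J0) f)" and big: "infinite J0 \<or> m < card J0"
    using excess_large[OF ex] by blast
  obtain J where JJ0: "J \<subseteq> J0" and Jc: "card J = Suc m" and Jf: "finite J"
  proof (cases "finite J0")
    case True
    then have "Suc m \<le> card J0" using big by simp
    then show ?thesis using obtain_subset_with_card_n that by metis
  next
    case False
    then show ?thesis using infinite_arbitrarily_large[of J0 "Suc m"] that by blast
  qed
  have gJ: "frame (restr (-J) f)" using frame_restr_mono[OF f J0] JJ0 by blast
  obtain A B where gs: "frame_seq (restr (-J) f) B A" using frame_seq_ex[OF gJ] by blast
  define g where "g = restr (-J) f"
  define cc where "cc j = analysis_op g (frame_seq.Sinv g B (f j))" for j
  define d where "d j = (\<lambda>n. (if n = j then 1 else 0) - cc j n)" for j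
  have gs': "frame_seq g B A" using gs unfolding g_def .
  have ccl2: "cc j \<in> l2" for j unfolding cc_def by (rule bessel_seq.U_l2[OF frame_seq.axioms(1)[OF gs']])
  have ccJ: "cc j i = 0" if "i \<in> J" for i j
    using that unfolding cc_def g_def by (simp add: analysis_op_def restr_def)
  have ccsyn: "bessel_seq.syn g (cc j) = f j" for j
    unfolding cc_def by (rule frame_seq.recon[OF gs'])
  have dK: "d j \<in> Kf f" for j
  proof -
    have dl2: "d j \<in> l2" unfolding d_def by (rule l2_diff[OF delta_l2 ccl2])
    have "l2inner (analysis_op f x) (d j) = 0" for x
    proof -
      have Ul2: "analysis_op f x \<in> l2"
        using frame_seq_ex[OF f] bessel_seq.U_l2 frame_seq.axioms(1) by metis
      have "l2inner (analysis_op f x) (d j) =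
          l2inner (analysis_op f x) (\<lambda>n. if n = j then 1 else 0) - l2inner (analysis_op f x) (cc j)"
        unfolding d_def by (rule l2inner_diff_right[OF delta_l2 ccl2 Ul2])
      also have "l2inner (analysis_op f x) (cc j) = l2inner (analysis_op g x) (cc j)"
        unfolding g_def using ccJ by (intro l2inner_restr[symmetric]) auto
      also have "\<dots> = cinner x (bessel_seq.syn g (cc j))"
        by (rule bessel_seq.cinner_syn[OF frame_seq.axioms(1)[OF gs'] ccl2, symmetric])
      also have "\<dots> = cinner x (f j)" by (simp add: ccsyn)
      finally show ?thesis by (simp add: l2inner_delta analysis_op_def)
    qed
    then show ?thesis unfolding Kf_def using dl2 by blast
  qed
  have dd: "d j i = (if i = j then 1 else 0)" if "i \<in> J" for i j
    unfolding d_def using ccJ[OF that] by simp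
  have "card J \<le> length Ob"
    by (rule fdim_card_bound[OF Ob sp Jf, of d]) (use dK dd in auto)
  then show False using Jc m_def by simp
qed


context frame_seq
begin

lemma Sinv_lincomb: "Sinv (a *\<^sub>C x + b *\<^sub>C y) = a *\<^sub>C Sinv x + b *\<^sub>C Sinv y"
  using Sinv_lin unfolding clinear_def by (simp add: clinear_scaleC[OF Sinv_lin])

definition g :: "nat \<Rightarrow> 'a" where "g n = Sinv (f n)"

lemma cinner_g: "cinner x (g n) = cinner (Sinv x) (f n)"
  unfolding g_def by (simp add: Sinv_self)

lemma g_frame: "frame g"
  unfolding frame_iff
proof (intro exI conjI allI)
  show "0 < A / B\<^sup>2" using A_pos B_pos by simp
  show "0 < B / A\<^sup>2" using A_pos B_pos by simp
  fix x
  show "summable (\<lambda>n. (cmod (cinner x (g n)))\<^sup>2)" unfolding cinner_g by (rule bes_summable)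
  have n1: "norm x / B \<le> norm (Sinv x)" using Sinv_norm_lower[of x] B_pos by (simp add: field_simps)
  have n2: "norm (Sinv x) \<le> norm x / A" by (rule Sinv_norm)
  have "A / B\<^sup>2 * (norm x)\<^sup>2 = A * (norm x / B)\<^sup>2" by (simp add: power_divide)
  also have "\<dots> \<le> A * (norm (Sinv x))\<^sup>2"
    using n1 A_pos B_pos by (intro mult_left_mono power_mono) auto
  also have "\<dots> \<le> (\<Sum>n. (cmod (cinner x (g n)))\<^sup>2)" unfolding cinner_g by (rule lower)
  finally show "A / B\<^sup>2 * (norm x)\<^sup>2 \<le> (\<Sum>n. (cmod (cinner x (g n)))\<^sup>2)" .
  have "(\<Sum>n. (cmod (cinner x (g n)))\<^sup>2) \<le> B * (norm (Sinv x))\<^sup>2" unfolding cinner_g by (rule bes_le)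
  also have "\<dots> \<le> B * (norm x / A)\<^sup>2"
    using n2 B_pos by (intro mult_left_mono power_mono) auto
  also have "\<dots> = B / A\<^sup>2 * (norm x)\<^sup>2" by (simp add: power_divide)
  finally show "(\<Sum>n. (cmod (cinner x (g n)))\<^sup>2) \<le> B / A\<^sup>2 * (norm x)\<^sup>2" .
qed

definition T :: "(nat \<Rightarrow> complex) \<Rightarrow> (nat \<Rightarrow> complex)" where
  "T c = (\<lambda>n. c n - analysis_op g (adjoint_l2 U c) n)"

lemma T_eq: "c \<in> l2 \<Longrightarrow> T c = (\<lambda>n. c n - U (Sinv (syn c)) n)"
  unfolding T_def by (simp add: adjoint_syn analysis_op_def cinner_g)

lemma T_l2: "c \<in> l2 \<Longrightarrow> T c \<in> l2"
  by (simp add: T_eq l2_diff U_l2)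

lemma T_K: "c \<in> l2 \<Longrightarrow> T c \<in> Kf f"
proof -
  assume c: "c \<in> l2"
  have "l2inner (U y) (T c) = 0" for y
  proof -
    have "l2inner (U y) (T c) = l2inner (U y) c - l2inner (U y) (U (Sinv (syn c)))"
      unfolding T_eq[OF c] by (rule l2inner_diff_right[OF c U_l2 U_l2])
    also have "l2inner (U y) (U (Sinv (syn c))) = cinner y (S (Sinv (syn c)))"
      by (simp add: S_inner_right)
    also have "\<dots> = cinner y (syn c)" by (simp add: S_Sinv)
    also have "\<dots> = l2inner (U y) c" by (rule cinner_syn[OF c])
    finally show ?thesis by simp
  qed
  then show ?thesis unfolding Kf_def using T_l2[OF c] by blast
qed

lemma T_bound:
  assumes c: "c \<in> l2"
  shows "l2norm (T c) \<le> (1 + B / A) * l2norm c"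
proof -
  have "l2norm (T c) \<le> l2norm c + l2norm (U (Sinv (syn c)))"
    unfolding T_eq[OF c] by (rule l2norm_diff_le[OF c U_l2])
  also have "l2norm (U (Sinv (syn c))) \<le> sqrt B * norm (Sinv (syn c))" by (rule l2norm_U)
  also have "\<dots> \<le> sqrt B * (norm (syn c) / A)"
    using B_pos by (intro mult_left_mono Sinv_norm) auto
  also have "\<dots> \<le> sqrt B * (sqrt B * l2norm c / A)"
    using B_pos A_pos by (intro mult_left_mono divide_right_mono norm_syn c) auto
  also have "\<dots> = B / A * l2norm c" using B_pos by (simp add: field_simps)
  finally show ?thesis by (simp add: algebra_simps)
qed

lemma T_lin:
  assumes a: "a \<in> l2" and b: "b \<in> l2"
  shows "T (\<lambda>n. \<alpha> * a n + \<beta> * b n) = (\<lambda>n. \<alpha> * T a n + \<beta> * T b n)"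
proof -
  have "U (Sinv (syn (\<lambda>n. \<alpha> * a n + \<beta> * b n))) = (\<lambda>n. \<alpha> * U (Sinv (syn a)) n + \<beta> * U (Sinv (syn b)) n)"
    by (simp add: syn_lincomb[OF a b] Sinv_lincomb U_lincomb)
  then show ?thesis
    by (simp add: T_eq a b l2_lincomb fun_eq_iff algebra_simps)
qed

lemma T_compact:
  assumes fd: "fdim (Kf f)"
  shows "compact_op_l2 T"
  unfolding compact_op_l2_def
proof (intro conjI ballI allI impI)
  show "T a \<in> l2" if "a \<in> l2" for a using T_l2[OF that] .
  show "T (\<lambda>n. \<alpha> * a n + \<beta> * b n) = (\<lambda>n. \<alpha> * T a n + \<beta> * T b n)" if "a \<in> l2" "b \<in> l2" for a b \<alpha> \<beta>
    using T_lin[OF that] .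
  fix x :: "nat \<Rightarrow> nat \<Rightarrow> complex" and C :: real
  assume h: "\<forall>k. x k \<in> l2 \<and> l2norm (x k) \<le> C"
  have y: "T (x k) \<in> Kf f" for k using T_K h by blast
  have yb: "l2norm (T (x k)) \<le> (1 + B / A) * C" for k
  proof -
    have "l2norm (T (x k)) \<le> (1 + B / A) * l2norm (x k)" using T_bound h by blast
    also have "\<dots> \<le> (1 + B / A) * C" using h A_pos B_pos by (intro mult_left_mono) auto
    finally show ?thesis .
  qed
  show "\<exists>r y. strict_mono r \<and> y \<in> l2 \<and> (\<lambda>k. l2norm (\<lambda>n. T (x (r k)) n - y n)) \<longlonglongrightarrow> 0"
    by (rule fdim_compact[OF K_subspace fd, of "\<lambda>k. T (x k)", OF y yb])
qed

end

lemma fdim_imp_compact: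
  assumes f: "frame f" and fd: "fdim (Kf f)"
  shows "\<exists>g :: nat \<Rightarrow> 'a::chilbert. frame g \<and>
       compact_op_l2 (\<lambda>c. (\<lambda>n. c n - analysis_op g (adjoint_l2 (analysis_op f) c) n))"
proof -
  obtain A B where fs: "frame_seq f B A" using frame_seq_ex[OF f] by blast
  have "frame (frame_seq.g f B)" by (rule frame_seq.g_frame[OF fs])
  moreover have "compact_op_l2 (frame_seq.T f B)" by (rule frame_seq.T_compact[OF fs fd])
  ultimately show ?thesis unfolding frame_seq.T_def[OF fs] by blast
qed

lemma compact_imp_fdim:
  assumes f: "frame f" and g: "frame g"
    and cpt: "compact_op_l2 (\<lambda>c. (\<lambda>n. c n - analysis_op g (adjoint_l2 (analysis_op f) c) n))"
  shows "fdim (Kf f)"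
proof (rule ccontr)
  assume nf: "\<not> fdim (Kf f)"
  obtain A B where fs: "frame_seq f B A" using frame_seq_ex[OF f] by blast
  have bs: "bessel_seq f B" using fs frame_seq.axioms(1) by blast
  have Ksub: "subspace_l2 (Kf f)" by (rule bessel_seq.K_subspace[OF bs])
  obtain u :: "nat \<Rightarrow> nat \<Rightarrow> complex" where uK: "\<And>k. u k \<in> Kf f" and uo: "\<And>k l. l2inner (u k) (u l) = (if k = l then 1 else 0)"
    using not_fdim_seq[OF Ksub nf] by blast
  have ul2: "u k \<in> l2" for k using uK unfolding Kf_def by blast
  have Tu: "(\<lambda>n. u k n - analysis_op g (adjoint_l2 (analysis_op f) (u k)) n) = u k" for k
  proof -
    have "adjoint_l2 (analysis_op f) (u k) = bessel_seq.syn f (u k)"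
      by (rule bessel_seq.adjoint_syn[OF bs ul2])
    also have "bessel_seq.syn f (u k) = 0"
    proof (rule cinner_ext_right)
      fix x
      show "cinner x (bessel_seq.syn f (u k)) = cinner x 0"
        using bessel_seq.cinner_syn[OF bs ul2, of x] uK[of k] unfolding Kf_def by simp
    qed
    finally show ?thesis by (simp add: analysis_op_def)
  qed
  have un: "l2norm (u k) \<le> 1" for k
  proof -
    have "complex_of_real ((l2norm (u k))\<^sup>2) = 1" using l2inner_self[OF ul2[of k]] uo[of k k] by simp
    then have "(l2norm (u k))\<^sup>2 = 1" by (metis of_real_eq_1_iff)
    then show ?thesis by (auto simp: power2_eq_1_iff)
  qed
  obtain r y
 where r: "strict_mono r" and y: "y \<in> l2"
    and lim: "(\<lambda>k. l2norm (\<lambda>n. (\<lambda>n. u (r k) n - analysis_op g (adjoint_l2 (analysis_op f) (u (r k))) n) n - y n)) \<longlonglongrightarrow> 0"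
    using cpt unfolding compact_op_l2_def using ul2 un by blast
  have Tu': "u k n - analysis_op g (adjoint_l2 (analysis_op f) (u k)) n = u k n" for k n
    using fun_cong[OF Tu[of k], of n] by simp
  have "(\<lambda>k. l2norm (\<lambda>n. u (r k) n - y n)) \<longlonglongrightarrow> 0" using lim by (simp only: Tu')

  then show False by (rule orth_seq_noconv[OF ul2 uo r y])
qed

theorem main_equiv:
  fixes f :: "nat \<Rightarrow> 'a::chilbert"
  assumes f: "frame f"
  shows "near_riesz_basis f \<longleftrightarrow>
    (\<exists>g :: nat \<Rightarrow> 'a. frame g \<and>
       compact_op_l2 (\<lambda>c. (\<lambda>n. c n - analysis_op g (adjoint_l2 (analysis_op f) c) n)))"
proof
  assume "near_riesz_basis f"
  then have ex: "excess f \<noteq> \<infinity>" unfolding near_riesz_basis_def by blast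
  have "fdim (Kf f)"
  proof (rule ccontr)
    assume "\<not> fdim (Kf f)"
    then have "excess f = \<infinity>" using excess_infty delete_many[OF f] by blast
    then show False using ex by simp
  qed
  then show "\<exists>g :: nat \<Rightarrow> 'a. frame g \<and>
       compact_op_l2 (\<lambda>c. (\<lambda>n. c n - analysis_op g (adjoint_l2 (analysis_op f) c) n))"
    by (rule fdim_imp_compact[OF f])
next
  assume "\<exists>g :: nat \<Rightarrow> 'a. frame g \<and>
       compact_op_l2 (\<lambda>c. (\<lambda>n. c n - analysis_op g (adjoint_l2 (analysis_op f) c) n))"
  then obtain g :: "nat \<Rightarrow> 'a" where g: "frame g"
    and cpt: "compact_op_l2 (\<lambda>c. (\<lambda>n. c n - analysis_op g (adjoint_l2 (analysis_op f) c) n))"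
    by blast
  have fd: "fdim (Kf f)" by (rule compact_imp_fdim[OF f g cpt])
  have "excess f \<noteq> \<infinity>" using excess_inf_not_fdim[OF f] fd by blast
  then show "near_riesz_basis f" unfolding near_riesz_basis_def using f by blast
qed


theorem corollary3p3:
  fixes f :: "nat \<Rightarrow> 'a::chilbert"
  assumes "separable_space (euclidean :: 'a topology)"
    and "infinite_dimensional_C TYPE('a)"
    and "frame f"
  shows "near_riesz_basis f \<longleftrightarrow>
    (\<exists>g :: nat \<Rightarrow> 'a. frame g \<and>
       compact_op_l2 (\<lambda>c. (\<lambda>n. c n - analysis_op g (adjoint_l2 (analysis_op f) c) n)))"
  using main_equiv[OF assms(3)] .

end
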